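(* Let $\mathbf K$ be an M$\Delta$C generated as a thick subcategory by a single object $G$. The maps \[\Phi(\mathbf I)=\{\mathbf P\in\operatorname{Spc}\mathbf K:\mathbf I\not\subseteq\mathbf P\}=\bigcup_{A\in\mathbf I}V(A),\qquad \Theta(S)=\bigcap_{\mathbf P\in\operatorname{Spc}\mathbf K\setminus S}\mathbf P\] restrict to mutually inverse, order-preserving bijections between the set of semiprime thick ideals of $\mathbf K$ and the set of Thomason subsets of $\operatorname{Spc}\mathbf K$.
   Context: M$\Delta$C: triangulated category with monoidal structure $(\otimes,\mathbf 1)$, $\otimes$ exact in each variable. Thick ideal: full triangulated subcategory closed under summands and two-sided tensoring. Prime ideal: proper thick ideal $\mathbf P$ with $\mathbf I\otimes\mathbf J\subseteq\mathbf P\Rightarrow\mathbf I\subseteq\mathbf P$ or $\mathbf J\subseteq\mathbf P$; a thick ideal is semiprime if it is an intersection of prime ideals. $\operatorname{Spc}\mathbf K$: set of primes with closed sets the intersections of $V(A)=\{\mathbf P:A\notin\mathbf P\}$. A Thomason subset of a topological space is a union of closed subsets each having quasicompact complement. The intersection over the empty family in $\Theta$ is $\mathbf K$. *)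

theory Defs
  imports "HOL-Analysis.Abstract_Topology"
begin

text \<open>A category with objects of type 'o and morphisms of type 'm, carried by
explicit sets. cmp C g f is the composite "g after f".\<close>

record ('o,'m) mdc =
  Ob :: "'o set"
  Mor :: "'m set"
  mdom :: "'m \<Rightarrow> 'o"
  mcod :: "'m \<Rightarrow> 'o"
  cmp :: "'m \<Rightarrow> 'm \<Rightarrow> 'm"
  idm :: "'o \<Rightarrow> 'm"
  madd :: "'m \<Rightarrow> 'm \<Rightarrow> 'm"
  mneg :: "'m \<Rightarrow> 'm"
  mzero :: "'o \<Rightarrow> 'o \<Rightarrow> 'm"
  shO :: "'o \<Rightarrow> 'o"
  shM :: "'m \<Rightarrow> 'm"
  Dist :: "('m \<times> 'm \<times> 'm) set"
  tenO :: "'o \<Rightarrow> 'o \<Rightarrow> 'o"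
  tenM :: "'m \<Rightarrow> 'm \<Rightarrow> 'm"
  unitO :: "'o"
  assoc :: "'o \<Rightarrow> 'o \<Rightarrow> 'o \<Rightarrow> 'm"   \<comment> \<open>(A*B)*D -> A*(B*D)\<close>
  lunit :: "'o \<Rightarrow> 'm"                 \<comment> \<open>1*A -> A\<close>
  runit :: "'o \<Rightarrow> 'm"                 \<comment> \<open>A*1 -> A\<close>
  ltw :: "'o \<Rightarrow> 'o \<Rightarrow> 'm"           \<comment> \<open>(Sigma A)*B -> Sigma(A*B)\<close>
  rtw :: "'o \<Rightarrow> 'o \<Rightarrow> 'm"           \<comment> \<open>A*(Sigma B) -> Sigma(A*B)\<close>

definition hom :: "('o,'m,'x) mdc_scheme \<Rightarrow> 'o \<Rightarrow> 'o \<Rightarrow> 'm set" where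
  "hom C A B = {f \<in> Mor C. mdom C f = A \<and> mcod C f = B}"

definition is_category :: "('o,'m,'x) mdc_scheme \<Rightarrow> bool" where
  "is_category C \<longleftrightarrow>
     (\<forall>f\<in>Mor C. mdom C f \<in> Ob C \<and> mcod C f \<in> Ob C) \<and>
     (\<forall>A\<in>Ob C. idm C A \<in> hom C A A) \<and>
     (\<forall>f\<in>Mor C. \<forall>g\<in>Mor C. mcod C f = mdom C g \<longrightarrow>
          cmp C g f \<in> hom C (mdom C f) (mcod C g)) \<and>
     (\<forall>f\<in>Mor C. cmp C (idm C (mcod C f)) f = f \<and> cmp C f (idm C (mdom C f)) = f) \<and>
     (\<forall>f\<in>Mor C. \<forall>g\<in>Mor C. \<forall>h\<in>Mor C. mcod C f = mdom C g \<and> mcod C g = mdom C h \<longrightarrow>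
          cmp C h (cmp C g f) = cmp C (cmp C h g) f)"

definition is_preadditive :: "('o,'m,'x) mdc_scheme \<Rightarrow> bool" where
  "is_preadditive C \<longleftrightarrow>
     (\<forall>A\<in>Ob C. \<forall>B\<in>Ob C.
        mzero C A B \<in> hom C A B \<and>
        (\<forall>f\<in>hom C A B. mneg C f \<in> hom C A B \<and> madd C f (mneg C f) = mzero C A B \<and>
                         madd C f (mzero C A B) = f) \<and>
        (\<forall>f\<in>hom C A B. \<forall>g\<in>hom C A B. madd C f g \<in> hom C A B \<and> madd C f g = madd C g f) \<and>
        (\<forall>f\<in>hom C A B. \<forall>g\<in>hom C A B. \<forall>h\<in>hom C A B.
            madd C (madd C f g) h = madd C f (madd C g h))) \<and>
     (\<forall>A\<in>Ob C. \<forall>B\<in>Ob C. \<forall>D\<in>Ob C. \<forall>f\<in>hom C A B. \<forall>g\<in>hom C A B. \<forall>h\<in>hom C B D.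
        cmp C h (madd C f g) = madd C (cmp C h f) (cmp C h g)) \<and>
     (\<forall>A\<in>Ob C. \<forall>B\<in>Ob C. \<forall>D\<in>Ob C. \<forall>h\<in>hom C A B. \<forall>f\<in>hom C B D. \<forall>g\<in>hom C B D.
        cmp C (madd C f g) h = madd C (cmp C f h) (cmp C g h))"

definition is_zero_obj :: "('o,'m,'x) mdc_scheme \<Rightarrow> 'o \<Rightarrow> bool" where
  "is_zero_obj C Z \<longleftrightarrow> Z \<in> Ob C \<and> idm C Z = mzero C Z Z"

definition is_biprod ::
  "('o,'m,'x) mdc_scheme \<Rightarrow> 'o \<Rightarrow> 'o \<Rightarrow> 'o \<Rightarrow> 'm \<Rightarrow> 'm \<Rightarrow> 'm \<Rightarrow> 'm \<Rightarrow> bool" where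
  "is_biprod C A A' B i1 p1 i2 p2 \<longleftrightarrow>
     i1 \<in> hom C A B \<and> p1 \<in> hom C B A \<and> i2 \<in> hom C A' B \<and> p2 \<in> hom C B A' \<and>
     cmp C p1 i1 = idm C A \<and> cmp C p2 i2 = idm C A' \<and>
     cmp C p1 i2 = mzero C A' A \<and> cmp C p2 i1 = mzero C A A' \<and>
     madd C (cmp C i1 p1) (cmp C i2 p2) = idm C B"

definition is_summand :: "('o,'m,'x) mdc_scheme \<Rightarrow> 'o \<Rightarrow> 'o \<Rightarrow> bool" where
  "is_summand C A B \<longleftrightarrow> A \<in> Ob C \<and> B \<in> Ob C \<and>
     (\<exists>A'\<in>Ob C. \<exists>i1 p1 i2 p2. is_biprod C A A' B i1 p1 i2 p2)"

definition is_additive :: "('o,'m,'x) mdc_scheme \<Rightarrow> bool" where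
  "is_additive C \<longleftrightarrow> is_category C \<and> is_preadditive C \<and> (\<exists>Z. is_zero_obj C Z) \<and>
     (\<forall>A\<in>Ob C. \<forall>A'\<in>Ob C. \<exists>B\<in>Ob C. \<exists>i1 p1 i2 p2. is_biprod C A A' B i1 p1 i2 p2)"

definition is_iso :: "('o,'m,'x) mdc_scheme \<Rightarrow> 'm \<Rightarrow> bool" where
  "is_iso C f \<longleftrightarrow> f \<in> Mor C \<and> (\<exists>g\<in>hom C (mcod C f) (mdom C f).
      cmp C g f = idm C (mdom C f) \<and> cmp C f g = idm C (mcod C f))"

definition is_triangle :: "('o,'m,'x) mdc_scheme \<Rightarrow> 'm \<times> 'm \<times> 'm \<Rightarrow> bool" where
  "is_triangle C t \<longleftrightarrow> (case t of (f,g,h) \<Rightarrow>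
     f \<in> Mor C \<and> g \<in> Mor C \<and> h \<in> Mor C \<and> mcod C f = mdom C g \<and> mcod C g = mdom C h \<and>
     mcod C h = shO C (mdom C f))"

definition is_tri_mor ::
  "('o,'m,'x) mdc_scheme \<Rightarrow> 'm \<times> 'm \<times> 'm \<Rightarrow> 'm \<times> 'm \<times> 'm \<Rightarrow> 'm \<times> 'm \<times> 'm \<Rightarrow> bool" where
  "is_tri_mor C t t' m \<longleftrightarrow> (case t of (f,g,h) \<Rightarrow> case t' of (f',g',h') \<Rightarrow> case m of (a,b,c) \<Rightarrow>
     is_triangle C t \<and> is_triangle C t' \<and>
     a \<in> hom C (mdom C f) (mdom C f') \<and> b \<in> hom C (mdom C g) (mdom C g') \<and>
     c \<in> hom C (mdom C h) (mdom C h') \<and>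
     cmp C b f = cmp C f' a \<and> cmp C c g = cmp C g' b \<and> cmp C (shM C a) h = cmp C h' c)"

definition is_triangulated :: "('o,'m,'x) mdc_scheme \<Rightarrow> bool" where
  "is_triangulated C \<longleftrightarrow> is_additive C \<and>
     \<comment> \<open>the shift is an additive automorphism\<close>
     bij_betw (shO C) (Ob C) (Ob C) \<and>
     (\<forall>A\<in>Ob C. \<forall>B\<in>Ob C. bij_betw (shM C) (hom C A B) (hom C (shO C A) (shO C B))) \<and>
     (\<forall>A\<in>Ob C. shM C (idm C A) = idm C (shO C A)) \<and>
     (\<forall>f\<in>Mor C. \<forall>g\<in>Mor C. mcod C f = mdom C g \<longrightarrow> shM C (cmp C g f) = cmp C (shM C g) (shM C f)) \<and>
     (\<forall>A\<in>Ob C. \<forall>B\<in>Ob C. \<forall>f\<in>hom C A B. \<forall>g\<in>hom C A B. shM C (madd C f g) = madd C (shM C f) (shM C g)) \<and>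
     \<comment> \<open>TR1\<close>
     (\<forall>t\<in>Dist C. is_triangle C t) \<and>
     (\<forall>t t' a b c. t \<in> Dist C \<and> is_tri_mor C t t' (a,b,c) \<and> is_iso C a \<and> is_iso C b \<and> is_iso C c
         \<longrightarrow> t' \<in> Dist C) \<and>
     (\<forall>X\<in>Ob C. \<forall>Z. is_zero_obj C Z \<longrightarrow> (idm C X, mzero C X Z, mzero C Z (shO C X)) \<in> Dist C) \<and>
     (\<forall>f\<in>Mor C. \<exists>g h. (f,g,h) \<in> Dist C) \<and>
     \<comment> \<open>TR2\<close>
     (\<forall>f g h. is_triangle C (f,g,h) \<longrightarrow>
         ((f,g,h) \<in> Dist C \<longleftrightarrow> (g, h, mneg C (shM C f)) \<in> Dist C)) \<and>
     \<comment> \<open>TR3\<close>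
     (\<forall>f g h f' g' h' a b. (f,g,h) \<in> Dist C \<and> (f',g',h') \<in> Dist C \<and>
         a \<in> hom C (mdom C f) (mdom C f') \<and> b \<in> hom C (mdom C g) (mdom C g') \<and>
         cmp C b f = cmp C f' a \<longrightarrow> (\<exists>c. is_tri_mor C (f,g,h) (f',g',h') (a,b,c))) \<and>
     \<comment> \<open>TR4 (octahedral axiom)\<close>
     (\<forall>f g u a v b w c. (f,u,a) \<in> Dist C \<and> (g,v,b) \<in> Dist C \<and> (cmp C g f, w, c) \<in> Dist C \<and>
         mcod C f = mdom C g \<longrightarrow>
        (\<exists>p q. p \<in> hom C (mcod C u) (mcod C w) \<and> q \<in> hom C (mcod C w) (mcod C v) \<and>
           (p, q, cmp C (shM C u) b) \<in> Dist C \<and>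
           cmp C p u = cmp C w g \<and> cmp C c p = a \<and> cmp C q w = v \<and>
           cmp C b q = cmp C (shM C f) c))"

definition is_monoidal_triangulated :: "('o,'m,'x) mdc_scheme \<Rightarrow> bool" where
  "is_monoidal_triangulated C \<longleftrightarrow> is_triangulated C \<and>
     \<comment> \<open>tensor bifunctor, additive in each variable\<close>
     unitO C \<in> Ob C \<and>
     (\<forall>A\<in>Ob C. \<forall>B\<in>Ob C. tenO C A B \<in> Ob C) \<and>
     (\<forall>A\<in>Ob C. \<forall>B\<in>Ob C. \<forall>A'\<in>Ob C. \<forall>B'\<in>Ob C. \<forall>f\<in>hom C A B. \<forall>g\<in>hom C A' B'.
         tenM C f g \<in> hom C (tenO C A A') (tenO C B B')) \<and>
     (\<forall>A\<in>Ob C. \<forall>B\<in>Ob C. tenM C (idm C A) (idm C B) = idm C (tenO C A B)) \<and>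
     (\<forall>f\<in>Mor C. \<forall>g\<in>Mor C. \<forall>f'\<in>Mor C. \<forall>g'\<in>Mor C. mcod C f = mdom C g \<and> mcod C f' = mdom C g' \<longrightarrow>
         tenM C (cmp C g f) (cmp C g' f') = cmp C (tenM C g g') (tenM C f f')) \<and>
     (\<forall>A\<in>Ob C. \<forall>B\<in>Ob C. \<forall>f\<in>hom C A B. \<forall>g\<in>hom C A B. \<forall>h\<in>Mor C.
         tenM C (madd C f g) h = madd C (tenM C f h) (tenM C g h) \<and>
         tenM C h (madd C f g) = madd C (tenM C h f) (tenM C h g)) \<and>
     \<comment> \<open>associator and unitors: natural isomorphisms satisfying pentagon and triangle\<close>
     (\<forall>A\<in>Ob C. \<forall>B\<in>Ob C. \<forall>D\<in>Ob C.
         assoc C A B D \<in> hom C (tenO C (tenO C A B) D) (tenO C A (tenO C B D)) \<and>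
         is_iso C (assoc C A B D)) \<and>
     (\<forall>A\<in>Ob C. lunit C A \<in> hom C (tenO C (unitO C) A) A \<and> is_iso C (lunit C A) \<and>
                runit C A \<in> hom C (tenO C A (unitO C)) A \<and> is_iso C (runit C A)) \<and>
     (\<forall>f\<in>Mor C. \<forall>g\<in>Mor C. \<forall>h\<in>Mor C.
         cmp C (assoc C (mcod C f) (mcod C g) (mcod C h)) (tenM C (tenM C f g) h) =
         cmp C (tenM C f (tenM C g h)) (assoc C (mdom C f) (mdom C g) (mdom C h))) \<and>
     (\<forall>f\<in>Mor C. cmp C (lunit C (mcod C f)) (tenM C (idm C (unitO C)) f) = cmp C f (lunit C (mdom C f)) \<and>
                 cmp C (runit C (mcod C f)) (tenM C f (idm C (unitO C))) = cmp C f (runit C (mdom C f))) \<and>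
     (\<forall>A\<in>Ob C. \<forall>B\<in>Ob C. \<forall>D\<in>Ob C. \<forall>E\<in>Ob C.
         cmp C (assoc C A B (tenO C D E)) (assoc C (tenO C A B) D E) =
         cmp C (tenM C (idm C A) (assoc C B D E))
               (cmp C (assoc C A (tenO C B D) E) (tenM C (assoc C A B D) (idm C E)))) \<and>
     (\<forall>A\<in>Ob C. \<forall>B\<in>Ob C.
         cmp C (tenM C (idm C A) (lunit C B)) (assoc C A (unitO C) B) = tenM C (runit C A) (idm C B)) \<and>
     \<comment> \<open>exactness of the tensor product in each variable\<close>
     (\<forall>A\<in>Ob C. \<forall>B\<in>Ob C.
         ltw C A B \<in> hom C (tenO C (shO C A) B) (shO C (tenO C A B)) \<and> is_iso C (ltw C A B) \<and>
         rtw C A B \<in> hom C (tenO C A (shO C B)) (shO C (tenO C A B)) \<and> is_iso C (rtw C A B)) \<and>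
     (\<forall>B\<in>Ob C. \<forall>f\<in>Mor C.
         cmp C (ltw C (mcod C f) B) (tenM C (shM C f) (idm C B)) =
           cmp C (shM C (tenM C f (idm C B))) (ltw C (mdom C f) B) \<and>
         cmp C (rtw C B (mcod C f)) (tenM C (idm C B) (shM C f)) =
           cmp C (shM C (tenM C (idm C B) f)) (rtw C B (mdom C f))) \<and>
     (\<forall>B\<in>Ob C. \<forall>f g h. (f,g,h) \<in> Dist C \<longrightarrow>
         (tenM C f (idm C B), tenM C g (idm C B), cmp C (ltw C (mdom C f) B) (tenM C h (idm C B))) \<in> Dist C \<and>
         (tenM C (idm C B) f, tenM C (idm C B) g, cmp C (rtw C B (mdom C f)) (tenM C (idm C B) h)) \<in> Dist C)"

definition thick :: "('o,'m,'x) mdc_scheme \<Rightarrow> 'o set \<Rightarrow> bool" where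
  "thick C S \<longleftrightarrow> S \<subseteq> Ob C \<and> (\<exists>Z\<in>S. is_zero_obj C Z) \<and>
     (\<forall>A\<in>Ob C. shO C A \<in> S \<longleftrightarrow> A \<in> S) \<and>
     (\<forall>f g h. (f,g,h) \<in> Dist C \<and> mdom C f \<in> S \<and> mdom C g \<in> S \<longrightarrow> mcod C g \<in> S) \<and>
     (\<forall>A B. is_summand C A B \<and> B \<in> S \<longrightarrow> A \<in> S)"

definition thick_gen :: "('o,'m,'x) mdc_scheme \<Rightarrow> 'o set \<Rightarrow> 'o set" where
  "thick_gen C X = \<Inter>{S. thick C S \<and> X \<subseteq> S}"

definition thick_ideal :: "('o,'m,'x) mdc_scheme \<Rightarrow> 'o set \<Rightarrow> bool" where
  "thick_ideal C I \<longleftrightarrow> thick C I \<and> (\<forall>A\<in>I. \<forall>B\<in>Ob C. tenO C A B \<in> I \<and> tenO C B A \<in> I)"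

definition tensor_set :: "('o,'m,'x) mdc_scheme \<Rightarrow> 'o set \<Rightarrow> 'o set \<Rightarrow> 'o set" where
  "tensor_set C I J = {tenO C A B | A B. A \<in> I \<and> B \<in> J}"

definition prime_ideal :: "('o,'m,'x) mdc_scheme \<Rightarrow> 'o set \<Rightarrow> bool" where
  "prime_ideal C P \<longleftrightarrow> thick_ideal C P \<and> P \<noteq> Ob C \<and>
     (\<forall>I J. thick_ideal C I \<and> thick_ideal C J \<and> tensor_set C I J \<subseteq> P \<longrightarrow> I \<subseteq> P \<or> J \<subseteq> P)"

definition Spc :: "('o,'m,'x) mdc_scheme \<Rightarrow> 'o set set" where
  "Spc C = {P. prime_ideal C P}"

text \<open>Intersection of a family of primes inside K (empty family gives K).\<close>
definition semiprime :: "('o,'m,'x) mdc_scheme \<Rightarrow> 'o set \<Rightarrow> bool" where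
  "semiprime C I \<longleftrightarrow> thick_ideal C I \<and> (\<exists>F. F \<subseteq> Spc C \<and> I = Ob C \<inter> \<Inter>F)"

definition Vsupp :: "('o,'m,'x) mdc_scheme \<Rightarrow> 'o \<Rightarrow> 'o set set" where
  "Vsupp C A = {P \<in> Spc C. A \<notin> P}"

text \<open>Balmer topology: closed sets are intersections (in Spc) of sets V(A).\<close>
definition spc_top :: "('o,'m,'x) mdc_scheme \<Rightarrow> 'o set topology" where
  "spc_top C = topology (\<lambda>U. U \<subseteq> Spc C \<and>
      (\<exists>\<A>. \<A> \<subseteq> Ob C \<and> Spc C - U = Spc C \<inter> \<Inter>(Vsupp C ` \<A>)))"

definition thomason :: "'a topology \<Rightarrow> 'a set \<Rightarrow> bool" where
  "thomason T Y \<longleftrightarrow> (\<exists>\<Z>. (\<forall>Z\<in>\<Z>. closedin T Z \<and> compactin T (topspace T - Z)) \<and> Y = \<Union>\<Z>)"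

definition Phi :: "('o,'m,'x) mdc_scheme \<Rightarrow> 'o set \<Rightarrow> 'o set set" where
  "Phi C I = {P \<in> Spc C. \<not> I \<subseteq> P}"

definition Theta :: "('o,'m,'x) mdc_scheme \<Rightarrow> 'o set set \<Rightarrow> 'o set" where
  "Theta C S = Ob C \<inter> \<Inter>(Spc C - S)"

end

theory Submission
  imports Defs
begin

locale MTC =
  fixes C :: "('o,'m) mdc"
  assumes mt: "is_monoidal_triangulated C"
begin

lemma tri: "is_triangulated C" using mt unfolding is_monoidal_triangulated_def by blast
lemma addc: "is_additive C" using tri unfolding is_triangulated_def by blast
lemma cat: "is_category C" using addc unfolding is_additive_def by blast
lemma pre: "is_preadditive C" using addc unfolding is_additive_def by blast

lemma hom_iff: "f \<in> hom C A B \<longleftrightarrow> f \<in> Mor C \<and> mdom C f = A \<and> mcod C f = B"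
  by (simp add: hom_def)

lemma mor_ob: "f \<in> Mor C \<Longrightarrow> mdom C f \<in> Ob C \<and> mcod C f \<in> Ob C"
  using cat[unfolded is_category_def, THEN conjunct1] by blast

lemma hom_ob: "f \<in> hom C A B \<Longrightarrow> A \<in> Ob C \<and> B \<in> Ob C"
  unfolding hom_iff using mor_ob by auto

lemma mor_hom: "f \<in> Mor C \<Longrightarrow> f \<in> hom C (mdom C f) (mcod C f)"
  by (simp add: hom_iff)

lemma cat_p1: "\<forall>A\<in>Ob C. idm C A \<in> hom C A A"
  using cat[unfolded is_category_def] by (elim conjE)
lemma cat_p2: "\<forall>f\<in>Mor C. \<forall>g\<in>Mor C. mcod C f = mdom C g \<longrightarrow> cmp C g f \<in> hom C (mdom C f) (mcod C g)"
  using cat[unfolded is_category_def] by (elim conjE)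
lemma cat_p3: "\<forall>f\<in>Mor C. cmp C (idm C (mcod C f)) f = f \<and> cmp C f (idm C (mdom C f)) = f"
  using cat[unfolded is_category_def] by (elim conjE)
lemma cat_p4: "\<forall>f\<in>Mor C. \<forall>g\<in>Mor C. \<forall>h\<in>Mor C. mcod C f = mdom C g \<and> mcod C g = mdom C h \<longrightarrow>
          cmp C h (cmp C g f) = cmp C (cmp C h g) f"
  using cat[unfolded is_category_def] by (elim conjE)
lemmas cat_parts = cat_p1 cat_p2 cat_p3 cat_p4

lemma id_hom: "A \<in> Ob C \<Longrightarrow> idm C A \<in> hom C A A"
  using cat_parts(1) by blast

lemma comp_hom: "f \<in> hom C A B \<Longrightarrow> g \<in> hom C B D \<Longrightarrow> cmp C g f \<in> hom C A D"
  using cat_parts(2) unfolding hom_iff by auto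

lemma id_l: "f \<in> hom C A B \<Longrightarrow> cmp C (idm C B) f = f"
  using cat_parts(3) unfolding hom_iff by auto

lemma id_r: "f \<in> hom C A B \<Longrightarrow> cmp C f (idm C A) = f"
  using cat_parts(3) unfolding hom_iff by auto

lemma comp_assoc: "f \<in> hom C A B \<Longrightarrow> g \<in> hom C B D \<Longrightarrow> h \<in> hom C D E \<Longrightarrow>
   cmp C h (cmp C g f) = cmp C (cmp C h g) f"
  using cat_parts(4) unfolding hom_iff by auto

lemma pre1: "A \<in> Ob C \<Longrightarrow> B \<in> Ob C \<Longrightarrow>
        mzero C A B \<in> hom C A B \<and>
        (\<forall>f\<in>hom C A B. mneg C f \<in> hom C A B \<and> madd C f (mneg C f) = mzero C A B \<and>
                         madd C f (mzero C A B) = f) \<and>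
        (\<forall>f\<in>hom C A B. \<forall>g\<in>hom C A B. madd C f g \<in> hom C A B \<and> madd C f g = madd C g f) \<and>
        (\<forall>f\<in>hom C A B. \<forall>g\<in>hom C A B. \<forall>h\<in>hom C A B.
            madd C (madd C f g) h = madd C f (madd C g h))"
  using pre[unfolded is_preadditive_def, THEN conjunct1] by blast

lemma zero_hom: "A \<in> Ob C \<Longrightarrow> B \<in> Ob C \<Longrightarrow> mzero C A B \<in> hom C A B"
  using pre1 by blast

lemma neg_hom: "f \<in> hom C A B \<Longrightarrow> mneg C f \<in> hom C A B"
  using pre1 hom_ob by blast

lemma add_neg: "f \<in> hom C A B \<Longrightarrow> madd C f (mneg C f) = mzero C A B"
  using pre1 hom_ob by blast

lemma add_zero: "f \<in> hom C A B \<Longrightarrow> madd C f (mzero C A B) = f"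
  using pre1 hom_ob by blast

lemma add_hom: "f \<in> hom C A B \<Longrightarrow> g \<in> hom C A B \<Longrightarrow> madd C f g \<in> hom C A B"
  using pre1 hom_ob by blast

lemma add_comm: "f \<in> hom C A B \<Longrightarrow> g \<in> hom C A B \<Longrightarrow> madd C f g = madd C g f"
  using pre1 hom_ob by blast

lemma add_assoc: "f \<in> hom C A B \<Longrightarrow> g \<in> hom C A B \<Longrightarrow> h \<in> hom C A B \<Longrightarrow>
    madd C (madd C f g) h = madd C f (madd C g h)"
  using pre1 hom_ob by blast

lemma comp_add_l: "f \<in> hom C A B \<Longrightarrow> g \<in> hom C A B \<Longrightarrow> h \<in> hom C B D \<Longrightarrow>
    cmp C h (madd C f g) = madd C (cmp C h f) (cmp C h g)"
  using pre[unfolded is_preadditive_def, THEN conjunct2, THEN conjunct1, rule_format, of A B D f g h] hom_ob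
  by blast

lemma comp_add_r: "h \<in> hom C A B \<Longrightarrow> f \<in> hom C B D \<Longrightarrow> g \<in> hom C B D \<Longrightarrow>
    cmp C (madd C f g) h = madd C (cmp C f h) (cmp C g h)"
  using pre[unfolded is_preadditive_def, THEN conjunct2, THEN conjunct2, rule_format, of A B D h f g] hom_ob
  by blast

lemma zero_add: "f \<in> hom C A B \<Longrightarrow> madd C (mzero C A B) f = f"
proof -
  assume f: "f \<in> hom C A B"
  then have "madd C (mzero C A B) f = madd C f (mzero C A B)"
    using add_comm zero_hom hom_ob by blast
  then show ?thesis using add_zero f by simp
qed

lemma add_cancel: assumes "x \<in> hom C A B" "y \<in> hom C A B" "z \<in> hom C A B"
  "madd C x z = madd C y z" shows "x = y"
proof -
  have nz: "mneg C z \<in> hom C A B" using assms neg_hom by blast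
  have "x = madd C x (madd C z (mneg C z))" using assms add_neg add_zero by simp
  also have "\<dots> = madd C (madd C x z) (mneg C z)" by (simp only: add_assoc[OF assms(1) assms(3) nz])
  also have "\<dots> = madd C (madd C y z) (mneg C z)" using assms(4) by simp
  also have "\<dots> = madd C y (madd C z (mneg C z))" by (simp only: add_assoc[OF assms(2) assms(3) nz])
  also have "\<dots> = y" using assms add_neg add_zero by simp
  finally show ?thesis .
qed

lemma idem_zero: assumes "x \<in> hom C A B" "madd C x x = x" shows "x = mzero C A B"
proof -
  have z: "mzero C A B \<in> hom C A B" using zero_hom hom_ob assms by blast
  have "madd C x x = madd C (mzero C A B) x" using assms zero_add by simp
  then show ?thesis using add_cancel[OF assms(1) z assms(1)] by blast
qed

lemma neg_unique: assumes "x \<in> hom C A B" "y \<in> hom C A B" "madd C x y = mzero C A B"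
  shows "y = mneg C x"
proof -
  have nx: "mneg C x \<in> hom C A B" using assms neg_hom by blast
  have "y = madd C y (madd C x (mneg C x))" using assms add_neg add_zero by simp
  also have "\<dots> = madd C (madd C y x) (mneg C x)" using assms nx add_assoc by simp
  also have "\<dots> = madd C (madd C x y) (mneg C x)" using assms add_comm by simp
  also have "\<dots> = mneg C x" using assms zero_add nx by simp
  finally show ?thesis .
qed

lemma neg_neg: assumes "f \<in> hom C A B" shows "mneg C (mneg C f) = f"
proof -
  have nf: "mneg C f \<in> hom C A B" using assms neg_hom by blast
  have "madd C (mneg C f) f = mzero C A B" using add_comm[OF nf assms] add_neg[OF assms] by simp
  then show ?thesis using neg_unique[OF nf assms] by simp
qed

lemma neg_inj: "f \<in> hom C A B \<Longrightarrow> g \<in> hom C A B \<Longrightarrow> mneg C f = mneg C g \<Longrightarrow> f = g"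
  using neg_neg by metis

lemma zero_zero: "A \<in> Ob C \<Longrightarrow> B \<in> Ob C \<Longrightarrow> madd C (mzero C A B) (mzero C A B) = mzero C A B"
  using add_zero zero_hom by blast

lemma comp_zero_r: assumes "h \<in> hom C B D" "A \<in> Ob C" shows "cmp C h (mzero C A B) = mzero C A D"
proof -
  have B: "B \<in> Ob C" using assms hom_ob by blast
  have "cmp C h (mzero C A B) = cmp C h (madd C (mzero C A B) (mzero C A B))"
    using zero_zero assms B by simp
  also have "\<dots> = madd C (cmp C h (mzero C A B)) (cmp C h (mzero C A B))"
    using comp_add_l zero_hom assms B by blast
  finally have e: "cmp C h (mzero C A B) = madd C (cmp C h (mzero C A B)) (cmp C h (mzero C A B))" .
  show ?thesis using idem_zero[OF comp_hom[OF zero_hom[OF assms(2) B] assms(1)] e[symmetric]] .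
qed

lemma comp_zero_l: assumes "h \<in> hom C A B" "D \<in> Ob C" shows "cmp C (mzero C B D) h = mzero C A D"
proof -
  have B: "B \<in> Ob C" using assms hom_ob by blast
  have "cmp C (mzero C B D) h = cmp C (madd C (mzero C B D) (mzero C B D)) h"
    using zero_zero assms B by simp
  also have "\<dots> = madd C (cmp C (mzero C B D) h) (cmp C (mzero C B D) h)"
    using comp_add_r zero_hom assms B by blast
  finally have e: "cmp C (mzero C B D) h = madd C (cmp C (mzero C B D) h) (cmp C (mzero C B D) h)" .
  show ?thesis using idem_zero[OF comp_hom[OF assms(1) zero_hom[OF B assms(2)]] e[symmetric]] .
qed

lemma neg_comp: assumes "h \<in> hom C A B" "f \<in> hom C B D"
  shows "cmp C (mneg C f) h = mneg C (cmp C f h)"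
proof -
  have nf: "mneg C f \<in> hom C B D" using assms neg_hom by blast
  have D: "D \<in> Ob C" using assms hom_ob by blast
  have "madd C (cmp C f h) (cmp C (mneg C f) h) = cmp C (madd C f (mneg C f)) h"
    using comp_add_r[OF assms(1) assms(2) nf] by simp
  also have "\<dots> = mzero C A D" using add_neg[OF assms(2)] comp_zero_l[OF assms(1) D] by simp
  finally show ?thesis using neg_unique comp_hom[OF assms] comp_hom[OF assms(1) nf] by blast
qed

lemma comp_neg: assumes "f \<in> hom C A B" "h \<in> hom C B D"
  shows "cmp C h (mneg C f) = mneg C (cmp C h f)"
proof -
  have nf: "mneg C f \<in> hom C A B" using assms neg_hom by blast
  have A: "A \<in> Ob C" using assms hom_ob by blast
  have "madd C (cmp C h f) (cmp C h (mneg C f)) = cmp C h (madd C f (mneg C f))"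
    using comp_add_l[OF assms(1) nf assms(2)] by simp
  also have "\<dots> = mzero C A D" using add_neg[OF assms(1)] comp_zero_r[OF assms(2) A] by simp
  finally show ?thesis using neg_unique comp_hom[OF assms] comp_hom[OF nf assms(2)] by blast
qed

lemma neg_zero: "A \<in> Ob C \<Longrightarrow> B \<in> Ob C \<Longrightarrow> mneg C (mzero C A B) = mzero C A B"
  using neg_unique[OF zero_hom zero_hom zero_zero] by metis

end

context MTC
begin

lemma tr_shO: "bij_betw (shO C) (Ob C) (Ob C)"
  using tri[unfolded is_triangulated_def] by (elim conjE)
lemma tr_shM: "\<forall>A\<in>Ob C. \<forall>B\<in>Ob C. bij_betw (shM C) (hom C A B) (hom C (shO C A) (shO C B))"
  using tri[unfolded is_triangulated_def] by (elim conjE)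
lemma tr_shid: "\<forall>A\<in>Ob C. shM C (idm C A) = idm C (shO C A)"
  using tri[unfolded is_triangulated_def] by (elim conjE)
lemma tr_shcomp: "\<forall>f\<in>Mor C. \<forall>g\<in>Mor C. mcod C f = mdom C g \<longrightarrow> shM C (cmp C g f) = cmp C (shM C g) (shM C f)"
  using tri[unfolded is_triangulated_def] by (elim conjE)
lemma tr_shadd: "\<forall>A\<in>Ob C. \<forall>B\<in>Ob C. \<forall>f\<in>hom C A B. \<forall>g\<in>hom C A B. shM C (madd C f g) = madd C (shM C f) (shM C g)"
  using tri[unfolded is_triangulated_def] by (elim conjE)
lemma tr_dist: "\<forall>t\<in>Dist C. is_triangle C t"
  using tri[unfolded is_triangulated_def] by (elim conjE)
lemma tr_zero: "\<forall>X\<in>Ob C. \<forall>Z. is_zero_obj C Z \<longrightarrow> (idm C X, mzero C X Z, mzero C Z (shO C X)) \<in> Dist C"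
  using tri[unfolded is_triangulated_def] by (elim conjE)
lemma tr_ex: "\<forall>f\<in>Mor C. \<exists>g h. (f,g,h) \<in> Dist C"
  using tri[unfolded is_triangulated_def] by (elim conjE)
lemma tr_rot: "\<forall>f g h. is_triangle C (f,g,h) \<longrightarrow>
         ((f,g,h) \<in> Dist C \<longleftrightarrow> (g, h, mneg C (shM C f)) \<in> Dist C)"
  using tri[unfolded is_triangulated_def] by (elim conjE)
lemma tr_3: "\<forall>f g h f' g' h' a b. (f,g,h) \<in> Dist C \<and> (f',g',h') \<in> Dist C \<and>
         a \<in> hom C (mdom C f) (mdom C f') \<and> b \<in> hom C (mdom C g) (mdom C g') \<and>
         cmp C b f = cmp C f' a \<longrightarrow> (\<exists>c. is_tri_mor C (f,g,h) (f',g',h') (a,b,c))"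
  using tri[unfolded is_triangulated_def] by (elim conjE)

lemma zero_ex: "\<exists>Z. is_zero_obj C Z"
  using addc[unfolded is_additive_def] by (elim conjE)

lemma biprod_ex: "A \<in> Ob C \<Longrightarrow> A' \<in> Ob C \<Longrightarrow> \<exists>B\<in>Ob C. \<exists>i1 p1 i2 p2. is_biprod C A A' B i1 p1 i2 p2"
  using addc[unfolded is_additive_def] by (elim conjE) blast

lemma sh_ob: "A \<in> Ob C \<Longrightarrow> shO C A \<in> Ob C"
  using tr_shO bij_betw_apply by metis

lemma sh_surj: "B \<in> Ob C \<Longrightarrow> \<exists>A\<in>Ob C. shO C A = B"
  using tr_shO unfolding bij_betw_def by (metis imageE)

lemma shM_hom: "f \<in> hom C A B \<Longrightarrow> shM C f \<in> hom C (shO C A) (shO C B)"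
  using tr_shM hom_ob bij_betw_apply by metis

lemma shM_inj: "f \<in> hom C A B \<Longrightarrow> g \<in> hom C A B \<Longrightarrow> shM C f = shM C g \<Longrightarrow> f = g"
  using tr_shM hom_ob unfolding bij_betw_def inj_on_def by metis

lemma shM_surj: "A \<in> Ob C \<Longrightarrow> B \<in> Ob C \<Longrightarrow> c \<in> hom C (shO C A) (shO C B) \<Longrightarrow>
   \<exists>x\<in>hom C A B. shM C x = c"
proof -
  assume "A \<in> Ob C" "B \<in> Ob C" "c \<in> hom C (shO C A) (shO C B)"
  then have "c \<in> shM C ` hom C A B" using tr_shM unfolding bij_betw_def by blast
  then show ?thesis by blast
qed

lemma shM_id: "A \<in> Ob C \<Longrightarrow> shM C (idm C A) = idm C (shO C A)"
  using tr_shid by blast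

lemma shM_comp: "f \<in> hom C A B \<Longrightarrow> g \<in> hom C B D \<Longrightarrow> shM C (cmp C g f) = cmp C (shM C g) (shM C f)"
  using tr_shcomp unfolding hom_iff by auto

lemma shM_add: "f \<in> hom C A B \<Longrightarrow> g \<in> hom C A B \<Longrightarrow> shM C (madd C f g) = madd C (shM C f) (shM C g)"
  using tr_shadd hom_ob by blast

lemma shM_zero: assumes "A \<in> Ob C" "B \<in> Ob C" shows "shM C (mzero C A B) = mzero C (shO C A) (shO C B)"
proof -
  have z: "mzero C A B \<in> hom C A B" using zero_hom assms by blast
  have "shM C (mzero C A B) = shM C (madd C (mzero C A B) (mzero C A B))" using zero_zero assms by simp
  also have "\<dots> = madd C (shM C (mzero C A B)) (shM C (mzero C A B))" using shM_add z by blast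
  finally show ?thesis using idem_zero[OF shM_hom[OF z]] by metis
qed

lemma shM_neg: assumes "f \<in> hom C A B" shows "shM C (mneg C f) = mneg C (shM C f)"
proof -
  have A: "A \<in> Ob C" "B \<in> Ob C" using assms hom_ob by blast+
  have nf: "mneg C f \<in> hom C A B" using neg_hom assms by blast
  have "madd C (shM C f) (shM C (mneg C f)) = shM C (madd C f (mneg C f))" using shM_add assms nf by metis
  also have "\<dots> = mzero C (shO C A) (shO C B)" using add_neg assms shM_zero A by metis
  finally show ?thesis using neg_unique shM_hom assms nf by blast
qed

lemma zero_obj_hom_to: assumes "is_zero_obj C Z" "f \<in> hom C A Z" shows "f = mzero C A Z"
proof -
  have "f = cmp C (idm C Z) f" using id_l assms by metis
  also have "\<dots> = cmp C (mzero C Z Z) f" using assms unfolding is_zero_obj_def by simp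
  also have "\<dots> = mzero C A Z" using comp_zero_l assms unfolding is_zero_obj_def by blast
  finally show ?thesis .
qed

lemma zero_obj_hom_from: assumes "is_zero_obj C Z" "f \<in> hom C Z A" shows "f = mzero C Z A"
proof -
  have "f = cmp C f (idm C Z)" using id_r assms by metis
  also have "\<dots> = cmp C f (mzero C Z Z)" using assms unfolding is_zero_obj_def by simp
  also have "\<dots> = mzero C Z A" using comp_zero_r assms unfolding is_zero_obj_def by blast
  finally show ?thesis .
qed

lemma zero_sh: assumes "is_zero_obj C Z" shows "is_zero_obj C (shO C Z)"
  using assms shM_id shM_zero sh_ob unfolding is_zero_obj_def by metis

lemma dist_hom: assumes "(f,g,h) \<in> Dist C"
  shows "f \<in> hom C (mdom C f) (mdom C g)" "g \<in> hom C (mdom C g) (mdom C h)"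
    "h \<in> hom C (mdom C h) (shO C (mdom C f))"
  using tr_dist assms unfolding is_triangle_def hom_iff by auto

lemma dist_tri: "(f,g,h) \<in> Dist C \<Longrightarrow> is_triangle C (f,g,h)"
  using tr_dist by blast

lemma rot: "(f,g,h) \<in> Dist C \<Longrightarrow> (g, h, mneg C (shM C f)) \<in> Dist C"
  using tr_rot dist_tri by blast

lemma rot_back: "is_triangle C (f,g,h) \<Longrightarrow> (g, h, mneg C (shM C f)) \<in> Dist C \<Longrightarrow> (f,g,h) \<in> Dist C"
  using tr_rot by blast

lemma tr3: assumes "(f,g,h) \<in> Dist C" "(f',g',h') \<in> Dist C"
  "a \<in> hom C (mdom C f) (mdom C f')" "b \<in> hom C (mdom C g) (mdom C g')" "cmp C b f = cmp C f' a"
  shows "\<exists>c. c \<in> hom C (mdom C h) (mdom C h') \<and> cmp C c g = cmp C g' b \<and> cmp C (shM C a) h = cmp C h' c"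
proof -
  obtain c where "is_tri_mor C (f,g,h) (f',g',h') (a,b,c)" using tr_3 assms by blast
  then show ?thesis unfolding is_tri_mor_def by auto
qed

lemma dist_zero_tri: assumes "X \<in> Ob C" "is_zero_obj C Z"
  shows "(idm C X, mzero C X Z, mzero C Z (shO C X)) \<in> Dist C"
  using tr_zero assms by blast

lemma comp_dist: assumes d: "(f,g,h) \<in> Dist C"
  shows "cmp C g f = mzero C (mdom C f) (mdom C h)"
proof -
  let ?X = "mdom C f"
  have hf: "f \<in> hom C ?X (mdom C g)" and hg: "g \<in> hom C (mdom C g) (mdom C h)"
    using dist_hom[OF d] by auto
  have X: "?X \<in> Ob C" using hf hom_ob by blast
  obtain Z where Z: "is_zero_obj C Z" using zero_ex by blast
  have ZO: "Z \<in> Ob C" using Z unfolding is_zero_obj_def by blast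
  have t0: "(idm C ?X, mzero C ?X Z, mzero C Z (shO C ?X)) \<in> Dist C"
    using dist_zero_tri X Z by blast
  have m1: "mdom C (idm C ?X) = ?X" using id_hom X hom_iff by blast
  have m2: "mdom C (mzero C ?X Z) = ?X" using zero_hom X ZO hom_iff by blast
  have m3: "mdom C (mzero C Z (shO C ?X)) = Z" using zero_hom sh_ob X ZO hom_iff by blast
  have a: "idm C ?X \<in> hom C (mdom C (idm C ?X)) (mdom C f)" using m1 id_hom X by simp
  have b: "f \<in> hom C (mdom C (mzero C ?X Z)) (mdom C g)" using m2 hf by simp
  have e: "cmp C f (idm C ?X) = cmp C f (idm C ?X)" by simp
  obtain c where c: "c \<in> hom C (mdom C (mzero C Z (shO C ?X))) (mdom C h)"
     "cmp C c (mzero C ?X Z) = cmp C g f"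
    using tr3[OF t0 d a b e] by blast
  have "c \<in> hom C Z (mdom C h)" using c m3 by simp
  then have "cmp C c (mzero C ?X Z) = mzero C ?X (mdom C h)" using comp_zero_r X by blast
  then show ?thesis using c by simp
qed

end

context MTC
begin

lemma exact_cov: assumes d: "(f,g,h) \<in> Dist C" and y: "y \<in> hom C W (mdom C g)"
  and gy: "cmp C g y = mzero C W (mdom C h)"
  shows "\<exists>x\<in>hom C W (mdom C f). cmp C f x = y"
proof -
  let ?X = "mdom C f" and ?Y = "mdom C g" and ?Zc = "mdom C h"
  have hf: "f \<in> hom C ?X ?Y" and hg: "g \<in> hom C ?Y ?Zc" and hh: "h \<in> hom C ?Zc (shO C ?X)"
    using dist_hom[OF d] by auto
  have X: "?X \<in> Ob C" and Y: "?Y \<in> Ob C" and Zc: "?Zc \<in> Ob C" using hf hg hom_ob by blast+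
  have W: "W \<in> Ob C" using y hom_ob by blast
  obtain Z where Z: "is_zero_obj C Z" using zero_ex by blast
  have ZO: "Z \<in> Ob C" using Z unfolding is_zero_obj_def by blast
  have t0: "(idm C W, mzero C W Z, mzero C Z (shO C W)) \<in> Dist C"
    using dist_zero_tri W Z by blast
  have t1: "(mzero C W Z, mzero C Z (shO C W), mneg C (shM C (idm C W))) \<in> Dist C"
    using rot[OF t0] .
  have t2: "(g, h, mneg C (shM C f)) \<in> Dist C" using rot[OF d] .
  have m1: "mdom C (mzero C W Z) = W" using zero_hom W ZO hom_iff by blast
  have m2: "mdom C (mzero C Z (shO C W)) = Z" using zero_hom sh_ob W ZO hom_iff by blast
  have shf: "shM C f \<in> hom C (shO C ?X) (shO C ?Y)" using shM_hom hf by blast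
  have m4: "mdom C (mneg C (shM C f)) = shO C ?X" using neg_hom[OF shf] hom_iff by blast
  have shi: "shM C (idm C W) = idm C (shO C W)" using shM_id W by blast
  have m3: "mdom C (mneg C (shM C (idm C W))) = shO C W"
    using neg_hom[OF id_hom[OF sh_ob[OF W]]] shi hom_iff by metis
  have a: "y \<in> hom C (mdom C (mzero C W Z)) (mdom C g)" using m1 y by simp
  have b: "mzero C Z ?Zc \<in> hom C (mdom C (mzero C Z (shO C W))) (mdom C h)" using m2 zero_hom ZO Zc by simp
  have e: "cmp C (mzero C Z ?Zc) (mzero C W Z) = cmp C g y"
    using gy comp_zero_l zero_hom W ZO Zc by metis
  obtain c where c: "c \<in> hom C (shO C W) (shO C ?X)"
     "cmp C (shM C y) (mneg C (shM C (idm C W))) = cmp C (mneg C (shM C f)) c"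
    using tr3[OF t1 t2 a b e] m3 m4 by auto
  have shy: "shM C y \<in> hom C (shO C W) (shO C ?Y)" using shM_hom y by blast
  have "cmp C (shM C y) (mneg C (shM C (idm C W))) = mneg C (shM C y)"
    using shi comp_neg[OF id_hom[OF sh_ob[OF W]] shy] id_r[OF shy] by simp
  moreover have "cmp C (mneg C (shM C f)) c = mneg C (cmp C (shM C f) c)"
    using neg_comp[OF c(1) shf] .
  ultimately have "shM C y = cmp C (shM C f) c"
    using c(2) neg_inj shy comp_hom[OF c(1) shf] by metis
  obtain x where x: "x \<in> hom C W ?X" "shM C x = c" using shM_surj[OF W X c(1)] by blast
  have "shM C (cmp C f x) = cmp C (shM C f) c" using shM_comp[OF x(1) hf] x(2) by simp
  then have "shM C y = shM C (cmp C f x)" using \<open>shM C y = cmp C (shM C f) c\<close> by simp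
  then have "y = cmp C f x" using shM_inj[OF y comp_hom[OF x(1) hf]] by blast
  then show ?thesis using x by blast
qed

lemma exact_contra: assumes d: "(f,g,h) \<in> Dist C" and y: "y \<in> hom C (mdom C g) W"
  and yf: "cmp C y f = mzero C (mdom C f) W"
  shows "\<exists>z\<in>hom C (mdom C h) W. cmp C z g = y"
proof -
  let ?X = "mdom C f" and ?Y = "mdom C g" and ?Zc = "mdom C h"
  have hf: "f \<in> hom C ?X ?Y" and hg: "g \<in> hom C ?Y ?Zc" and hh: "h \<in> hom C ?Zc (shO C ?X)"
    using dist_hom[OF d] by auto
  have X: "?X \<in> Ob C" and Y: "?Y \<in> Ob C" and Zc: "?Zc \<in> Ob C" using hf hg hom_ob by blast+
  have W: "W \<in> Ob C" using y hom_ob by blast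
  obtain Z where Z: "is_zero_obj C Z" using zero_ex by blast
  have ZO: "Z \<in> Ob C" using Z unfolding is_zero_obj_def by blast
  have SZ: "is_zero_obj C (shO C Z)" using zero_sh Z by blast
  have SZO: "shO C Z \<in> Ob C" using sh_ob ZO by blast
  have z1: "mzero C Z W \<in> hom C Z W" using zero_hom ZO W by blast
  have z2: "mzero C W (shO C Z) \<in> hom C W (shO C Z)" using zero_hom SZO W by blast
  have tri: "is_triangle C (mzero C Z W, idm C W, mzero C W (shO C Z))"
    using z1 z2 id_hom[OF W] unfolding is_triangle_def hom_iff by auto
  have "mneg C (shM C (mzero C Z W)) = mzero C (shO C Z) (shO C W)"
    using shM_zero ZO W neg_zero SZO sh_ob by metis
  then have "(idm C W, mzero C W (shO C Z), mneg C (shM C (mzero C Z W))) \<in> Dist C"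
    using dist_zero_tri[OF W SZ] by simp
  then have t2: "(mzero C Z W, idm C W, mzero C W (shO C Z)) \<in> Dist C"
    using rot_back[OF tri] by blast
  have a: "mzero C ?X Z \<in> hom C (mdom C f) (mdom C (mzero C Z W))"
    using zero_hom X ZO z1 hom_iff by auto
  have b: "y \<in> hom C (mdom C g) (mdom C (idm C W))" using y id_hom[OF W] hom_iff by auto
  have e: "cmp C y f = cmp C (mzero C Z W) (mzero C ?X Z)"
    using yf comp_zero_r[OF z1 X] by simp
  obtain c where c: "c \<in> hom C (mdom C h) (mdom C (mzero C W (shO C Z)))"
     "cmp C c g = cmp C (idm C W) y"
    using tr3[OF d t2 a b e] by blast
  have "c \<in> hom C ?Zc W" using c(1) z2 hom_iff by auto
  moreover have "cmp C c g = y" using c(2) id_l[OF y] by simp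
  ultimately show ?thesis by blast
qed

end

context MTC
begin

lemma thick_sub: "thick C S \<Longrightarrow> S \<subseteq> Ob C"
  unfolding thick_def by blast
lemma thick_zero_ex: "thick C S \<Longrightarrow> \<exists>Z\<in>S. is_zero_obj C Z"
  unfolding thick_def by blast
lemma thick_sh: "thick C S \<Longrightarrow> A \<in> Ob C \<Longrightarrow> shO C A \<in> S \<longleftrightarrow> A \<in> S"
  unfolding thick_def by blast
lemma thick_ext: "thick C S \<Longrightarrow> (f,g,h) \<in> Dist C \<Longrightarrow> mdom C f \<in> S \<Longrightarrow> mdom C g \<in> S \<Longrightarrow> mcod C g \<in> S"
  unfolding thick_def by blast
lemma thick_summand: "thick C S \<Longrightarrow> is_summand C A B \<Longrightarrow> B \<in> S \<Longrightarrow> A \<in> S"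
  unfolding thick_def by blast

lemma iso_summand: assumes f: "f \<in> hom C A B" and g: "g \<in> hom C B A"
  and gf: "cmp C g f = idm C A" and fg: "cmp C f g = idm C B"
  shows "is_summand C A B"
proof -
  have A: "A \<in> Ob C" and B: "B \<in> Ob C" using f hom_ob by blast+
  obtain Z where Z: "is_zero_obj C Z" using zero_ex by blast
  have ZO: "Z \<in> Ob C" using Z unfolding is_zero_obj_def by blast
  have z1: "mzero C Z B \<in> hom C Z B" and z2: "mzero C B Z \<in> hom C B Z" using zero_hom ZO B by blast+
  have "cmp C (mzero C B Z) (mzero C Z B) = mzero C Z Z" using comp_zero_l[OF z1 ZO] .
  also have "\<dots> = idm C Z" using Z unfolding is_zero_obj_def by simp
  finally have e1: "cmp C (mzero C B Z) (mzero C Z B) = idm C Z" .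
  have e2: "cmp C g (mzero C Z B) = mzero C Z A" using comp_zero_r[OF g ZO] .
  have e3: "cmp C (mzero C B Z) f = mzero C A Z" using comp_zero_l[OF f ZO] .
  have "cmp C (mzero C Z B) (mzero C B Z) = mzero C B B" using comp_zero_l[OF z2 B] .
  then have e4: "madd C (cmp C f g) (cmp C (mzero C Z B) (mzero C B Z)) = idm C B"
    using fg add_zero[OF id_hom[OF B]] by simp
  have "is_biprod C A Z B f g (mzero C Z B) (mzero C B Z)"
    unfolding is_biprod_def using f g z1 z2 gf e1 e2 e3 e4 by blast
  then show ?thesis unfolding is_summand_def using A B ZO by blast
qed

lemma thick_iso: assumes "thick C S" "f \<in> hom C A B" "g \<in> hom C B A"
  "cmp C g f = idm C A" "cmp C f g = idm C B" "B \<in> S"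
  shows "A \<in> S"
  using thick_summand[OF assms(1) iso_summand[OF assms(2-5)] assms(6)] .

lemma thick_iso_iff: assumes "thick C S" "f \<in> hom C A B" "g \<in> hom C B A"
  "cmp C g f = idm C A" "cmp C f g = idm C B"
  shows "A \<in> S \<longleftrightarrow> B \<in> S"
  using thick_iso[OF assms(1-5)] thick_iso[OF assms(1) assms(3) assms(2) assms(5) assms(4)] by blast

lemma thick_all_zero: assumes "thick C S" "is_zero_obj C Z'" shows "Z' \<in> S"
proof -
  obtain Z where Z: "Z \<in> S" "is_zero_obj C Z" using thick_zero_ex assms by blast
  have ZO: "Z \<in> Ob C" "Z' \<in> Ob C" using Z assms unfolding is_zero_obj_def by blast+
  have f: "mzero C Z' Z \<in> hom C Z' Z" and g: "mzero C Z Z' \<in> hom C Z Z'" using zero_hom ZO by blast+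
  have "cmp C (mzero C Z Z') (mzero C Z' Z) = mzero C Z' Z'" using comp_zero_l[OF f] ZO by blast
  then have e1: "cmp C (mzero C Z Z') (mzero C Z' Z) = idm C Z'" using assms unfolding is_zero_obj_def by simp
  have "cmp C (mzero C Z' Z) (mzero C Z Z') = mzero C Z Z" using comp_zero_l[OF g] ZO by blast
  then have e2: "cmp C (mzero C Z' Z) (mzero C Z Z') = idm C Z" using Z unfolding is_zero_obj_def by simp
  show ?thesis using thick_iso[OF assms(1) f g e1 e2 Z(1)] .
qed

lemma biprod_swap: "is_biprod C A A' E i1 p1 i2 p2 \<Longrightarrow> is_biprod C A' A E i2 p2 i1 p1"
  unfolding is_biprod_def using add_comm comp_hom by metis

lemma biprod_summand1: "is_biprod C A A' E i1 p1 i2 p2 \<Longrightarrow> A' \<in> Ob C \<Longrightarrow> is_summand C A E"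
  unfolding is_summand_def is_biprod_def using hom_ob by blast

lemma biprod_summand2: "is_biprod C A A' E i1 p1 i2 p2 \<Longrightarrow> A \<in> Ob C \<Longrightarrow> is_summand C A' E"
  using biprod_summand1 biprod_swap by blast

end

context MTC
begin

lemma thick_biprod: assumes S: "thick C S" and AS: "A \<in> S" and BS: "B \<in> S"
  and bp: "is_biprod C A B E i1 p1 i2 p2"
  shows "E \<in> S"
proof -
  have i1: "i1 \<in> hom C A E" and p1: "p1 \<in> hom C E A" and i2: "i2 \<in> hom C B E" and p2: "p2 \<in> hom C E B"
    and p1i1: "cmp C p1 i1 = idm C A" and p2i2: "cmp C p2 i2 = idm C B"
    and p1i2: "cmp C p1 i2 = mzero C B A" and p2i1: "cmp C p2 i1 = mzero C A B"
    and sumid: "madd C (cmp C i1 p1) (cmp C i2 p2) = idm C E"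
    using bp unfolding is_biprod_def by blast+
  have A: "A \<in> Ob C" and B: "B \<in> Ob C" and E: "E \<in> Ob C" using i1 i2 hom_ob by blast+
  obtain B' where B': "B' \<in> Ob C" "shO C B' = B" using sh_surj[OF B] by blast
  have B'S: "B' \<in> S" using thick_sh[OF S B'(1)] B' BS by simp
  have u: "mzero C B' A \<in> hom C B' A" using zero_hom B' A by blast
  obtain g h where d: "(mzero C B' A, g, h) \<in> Dist C" using tr_ex u hom_iff by blast
  let ?X = "mdom C h"
  have mu: "mdom C (mzero C B' A) = B'" "mcod C (mzero C B' A) = A" using u hom_iff by auto
  have mg: "mdom C g = A" using dist_hom(1)[OF d] u hom_iff by auto
  have g: "g \<in> hom C A ?X" using dist_hom(2)[OF d] mg by simp
  have h: "h \<in> hom C ?X B" using dist_hom(3)[OF d] mu B' by simp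
  have X: "?X \<in> Ob C" using g hom_ob by blast
  have XS: "?X \<in> S" using thick_ext[OF S d] mu mg B'S AS g hom_iff by auto
  have shu: "mneg C (shM C (mzero C B' A)) = mzero C B (shO C A)"
    using shM_zero[OF B'(1) A] B' neg_zero sh_ob A B by metis
  have d2: "(g, h, mzero C B (shO C A)) \<in> Dist C" using rot[OF d] shu by simp
  have d3: "(h, mzero C B (shO C A), mneg C (shM C g)) \<in> Dist C" using rot[OF d2] .
  have SA: "shO C A \<in> Ob C" using sh_ob A by blast
  have sg: "mneg C (shM C g) \<in> hom C (shO C A) (shO C ?X)" using neg_hom shM_hom g by blast
  have y1: "idm C B \<in> hom C B (mdom C (mzero C B (shO C A)))" using id_hom B zero_hom SA hom_iff by auto
  have e1: "cmp C (mzero C B (shO C A)) (idm C B) = mzero C B (mdom C (mneg C (shM C g)))"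
    using id_r zero_hom B SA sg hom_iff by metis
  obtain s where s: "s \<in> hom C B ?X" "cmp C h s = idm C B"
    using exact_cov[OF d3 y1 e1] h hom_iff by auto
  have y2: "idm C A \<in> hom C (mdom C g) A" using id_hom A mg by simp
  have e2: "cmp C (idm C A) (mzero C B' A) = mzero C (mdom C (mzero C B' A)) A"
    using id_l[OF u] mu by simp
  obtain r where r: "r \<in> hom C ?X A" "cmp C r g = idm C A"
    using exact_contra[OF d y2 e2] by blast
  have hg: "cmp C h g = mzero C A B" using comp_dist[OF d2] mg zero_hom B SA hom_iff by metis
  have sh: "cmp C s h \<in> hom C ?X ?X" using comp_hom h s by blast
  have rsh: "cmp C r (cmp C s h) \<in> hom C ?X A" using comp_hom sh r by blast
  define r' where "r' = madd C r (mneg C (cmp C r (cmp C s h)))"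
  have r': "r' \<in> hom C ?X A" unfolding r'_def using add_hom neg_hom r rsh by blast
  have "cmp C (cmp C r (cmp C s h)) g = cmp C r (cmp C (cmp C s h) g)"
    by (rule comp_assoc[OF g sh r(1), symmetric])
  also have "\<dots> = cmp C r (cmp C s (cmp C h g))" using comp_assoc[OF g h s(1)] by simp
  also have "\<dots> = mzero C A A" by (simp add: hg comp_zero_r[OF s(1) A] comp_zero_r[OF r(1) A])
  finally have rshg: "cmp C (cmp C r (cmp C s h)) g = mzero C A A" .
  have r'g: "cmp C r' g = idm C A"
  proof -
    have "cmp C r' g = madd C (cmp C r g) (cmp C (mneg C (cmp C r (cmp C s h))) g)"
      unfolding r'_def using comp_add_r[OF g r(1) neg_hom[OF rsh]] .
    also have "\<dots> = madd C (idm C A) (mneg C (mzero C A A))"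
      using neg_comp[OF g rsh] rshg r(2) by simp
    also have "\<dots> = idm C A" using neg_zero A add_zero id_hom by metis
    finally show ?thesis .
  qed
  have "cmp C (cmp C r (cmp C s h)) s = cmp C r (cmp C (cmp C s h) s)"
    by (rule comp_assoc[OF s(1) sh r(1), symmetric])
  also have "\<dots> = cmp C r (cmp C s (cmp C h s))" using comp_assoc[OF s(1) h s(1)] by simp
  also have "\<dots> = cmp C r s" using s(2) id_r[OF s(1)] by simp
  finally have rshs: "cmp C (cmp C r (cmp C s h)) s = cmp C r s" .
  have r's: "cmp C r' s = mzero C B A"
  proof -
    have rs: "cmp C r s \<in> hom C B A" using comp_hom s r by blast
    have "cmp C r' s = madd C (cmp C r s) (cmp C (mneg C (cmp C r (cmp C s h))) s)"
      unfolding r'_def using comp_add_r[OF s(1) r(1) neg_hom[OF rsh]] .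
    also have "\<dots> = madd C (cmp C r s) (mneg C (cmp C r s))"
      using neg_comp[OF s(1) rsh] rshs by simp
    also have "\<dots> = mzero C B A" using add_neg rs by blast
    finally show ?thesis .
  qed
  have gp1: "cmp C g p1 \<in> hom C E ?X" and sp2: "cmp C s p2 \<in> hom C E ?X"
    using comp_hom g p1 s p2 by blast+
  have i1r: "cmp C i1 r' \<in> hom C ?X E" and i2h: "cmp C i2 h \<in> hom C ?X E"
    using comp_hom i1 r' i2 h by blast+
  define phi where "phi = madd C (cmp C g p1) (cmp C s p2)"
  define psi where "psi = madd C (cmp C i1 r') (cmp C i2 h)"
  have phi: "phi \<in> hom C E ?X" unfolding phi_def using add_hom gp1 sp2 by blast
  have psi: "psi \<in> hom C ?X E" unfolding psi_def using add_hom i1r i2h by blast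
  have psig: "cmp C psi g = i1"
  proof -
    have "cmp C psi g = madd C (cmp C (cmp C i1 r') g) (cmp C (cmp C i2 h) g)"
      unfolding psi_def using comp_add_r[OF g i1r i2h] .
    also have "\<dots> = madd C (cmp C i1 (cmp C r' g)) (cmp C i2 (cmp C h g))"
      using comp_assoc[OF g r' i1] comp_assoc[OF g h i2] by simp
    also have "\<dots> = madd C i1 (mzero C A E)"
      using r'g hg id_r[OF i1] comp_zero_r[OF i2 A] by simp
    also have "\<dots> = i1" using add_zero i1 by blast
    finally show ?thesis .
  qed
  have psis: "cmp C psi s = i2"
  proof -
    have "cmp C psi s = madd C (cmp C (cmp C i1 r') s) (cmp C (cmp C i2 h) s)"
      unfolding psi_def using comp_add_r[OF s(1) i1r i2h] .
    also have "\<dots> = madd C (cmp C i1 (cmp C r' s)) (cmp C i2 (cmp C h s))"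
      using comp_assoc[OF s(1) r' i1] comp_assoc[OF s(1) h i2] by simp
    also have "\<dots> = madd C (mzero C B E) i2"
      using r's s(2) id_r[OF i2] comp_zero_r[OF i1 B] by simp
    also have "\<dots> = i2" using zero_add i2 by blast
    finally show ?thesis .
  qed
  have psiphi: "cmp C psi phi = idm C E"
  proof -
    have "cmp C psi phi = madd C (cmp C psi (cmp C g p1)) (cmp C psi (cmp C s p2))"
      unfolding phi_def using comp_add_l[OF gp1 sp2 psi] .
    also have "\<dots> = madd C (cmp C (cmp C psi g) p1) (cmp C (cmp C psi s) p2)"
      using comp_assoc[OF p1 g psi] comp_assoc[OF p2 s(1) psi] by simp
    also have "\<dots> = idm C E" using psig psis sumid by simp
    finally show ?thesis .
  qed
  have phii1: "cmp C phi i1 = g"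
  proof -
    have "cmp C phi i1 = madd C (cmp C (cmp C g p1) i1) (cmp C (cmp C s p2) i1)"
      unfolding phi_def using comp_add_r[OF i1 gp1 sp2] .
    also have "\<dots> = madd C (cmp C g (cmp C p1 i1)) (cmp C s (cmp C p2 i1))"
      using comp_assoc[OF i1 p1 g] comp_assoc[OF i1 p2 s(1)] by simp
    also have "\<dots> = madd C g (mzero C A ?X)"
      using p1i1 p2i1 id_r[OF g] comp_zero_r[OF s(1) A] by simp
    also have "\<dots> = g" using add_zero g by blast
    finally show ?thesis .
  qed
  have phii2: "cmp C phi i2 = s"
  proof -
    have "cmp C phi i2 = madd C (cmp C (cmp C g p1) i2) (cmp C (cmp C s p2) i2)"
      unfolding phi_def using comp_add_r[OF i2 gp1 sp2] .
    also have "\<dots> = madd C (cmp C g (cmp C p1 i2)) (cmp C s (cmp C p2 i2))"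
      using comp_assoc[OF i2 p1 g] comp_assoc[OF i2 p2 s(1)] by simp
    also have "\<dots> = madd C (mzero C B ?X) s"
      using p1i2 p2i2 id_r[OF s(1)] comp_zero_r[OF g B] by simp
    also have "\<dots> = s" using zero_add s by blast
    finally show ?thesis .
  qed
  define w where "w = cmp C phi psi"
  have w: "w \<in> hom C ?X ?X" unfolding w_def using comp_hom psi phi by blast
  have wg: "cmp C w g = g" unfolding w_def using comp_assoc[OF g psi phi] psig phii1 by simp
  have ws: "cmp C w s = s" unfolding w_def using comp_assoc[OF s(1) psi phi] psis phii2 by simp
  define th where "th = madd C (idm C ?X) (mneg C w)"
  have th: "th \<in> hom C ?X ?X" unfolding th_def using add_hom id_hom X neg_hom w by blast
  have thg: "cmp C th g = mzero C A ?X"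
  proof -
    have "cmp C th g = madd C (cmp C (idm C ?X) g) (cmp C (mneg C w) g)"
      unfolding th_def using comp_add_r[OF g id_hom[OF X] neg_hom[OF w]] .
    also have "\<dots> = madd C g (mneg C g)" using id_l g neg_comp[OF g w] wg by simp
    also have "\<dots> = mzero C A ?X" using add_neg g by blast
    finally show ?thesis .
  qed
  have ths: "cmp C th s = mzero C B ?X"
  proof -
    have "cmp C th s = madd C (cmp C (idm C ?X) s) (cmp C (mneg C w) s)"
      unfolding th_def using comp_add_r[OF s(1) id_hom[OF X] neg_hom[OF w]] .
    also have "\<dots> = madd C s (mneg C s)" using id_l s neg_comp[OF s(1) w] ws by simp
    also have "\<dots> = mzero C B ?X" using add_neg s by blast
    finally show ?thesis .
  qed
  have y3: "th \<in> hom C (mdom C h) ?X" using th by simp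
  have e3: "cmp C th g = mzero C (mdom C g) ?X" using thg mg by simp
  obtain t where t: "t \<in> hom C (mdom C (mzero C B (shO C A))) ?X" "cmp C t h = th"
    using exact_contra[OF d2 y3 e3] by blast
  have t': "t \<in> hom C B ?X" using t(1) zero_hom B SA hom_iff by auto
  have "t = cmp C t (cmp C h s)" using s(2) id_r[OF t'] by simp
  also have "\<dots> = cmp C th s" using comp_assoc[OF s(1) h t'] t(2) by simp
  finally have "t = mzero C B ?X" using ths by simp
  then have "th = mzero C ?X ?X" using t(2) comp_zero_l[OF h X] by simp
  then have "madd C (idm C ?X) (mneg C w) = mzero C ?X ?X" unfolding th_def .
  then have "mneg C w = mneg C (idm C ?X)" using neg_unique id_hom X neg_hom w by blast
  then have "w = idm C ?X" using neg_inj w id_hom X by blast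
  then have phipsi: "cmp C phi psi = idm C ?X" unfolding w_def .
  show "E \<in> S" using thick_iso[OF S phi psi psiphi phipsi XS] .
qed

lemma thick_biprod_iff: assumes S: "thick C S" and bp: "is_biprod C A B E i1 p1 i2 p2"
  shows "E \<in> S \<longleftrightarrow> A \<in> S \<and> B \<in> S"
proof -
  have A: "A \<in> Ob C" and B: "B \<in> Ob C" using bp hom_ob unfolding is_biprod_def by blast+
  show ?thesis using thick_biprod[OF S _ _ bp] thick_summand[OF S biprod_summand1[OF bp B]]
      thick_summand[OF S biprod_summand2[OF bp A]] by blast
qed

end

context MTC
begin

lemma unit_ob: "unitO C \<in> Ob C"
  using mt[unfolded is_monoidal_triangulated_def] by (elim conjE)
lemma mt_tenO: "\<forall>A\<in>Ob C. \<forall>B\<in>Ob C. tenO C A B \<in> Ob C"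
  using mt[unfolded is_monoidal_triangulated_def] by (elim conjE)
lemma mt_tenM: "\<forall>A\<in>Ob C. \<forall>B\<in>Ob C. \<forall>A'\<in>Ob C. \<forall>B'\<in>Ob C. \<forall>f\<in>hom C A B. \<forall>g\<in>hom C A' B'.
         tenM C f g \<in> hom C (tenO C A A') (tenO C B B')"
  using mt[unfolded is_monoidal_triangulated_def] by (elim conjE)
lemma mt_tenid: "\<forall>A\<in>Ob C. \<forall>B\<in>Ob C. tenM C (idm C A) (idm C B) = idm C (tenO C A B)"
  using mt[unfolded is_monoidal_triangulated_def] by (elim conjE)
lemma mt_tencomp: "\<forall>f\<in>Mor C. \<forall>g\<in>Mor C. \<forall>f'\<in>Mor C. \<forall>g'\<in>Mor C. mcod C f = mdom C g \<and> mcod C f' = mdom C g' \<longrightarrow>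
         tenM C (cmp C g f) (cmp C g' f') = cmp C (tenM C g g') (tenM C f f')"
  using mt[unfolded is_monoidal_triangulated_def] by (elim conjE)
lemma mt_tenadd: "\<forall>A\<in>Ob C. \<forall>B\<in>Ob C. \<forall>f\<in>hom C A B. \<forall>g\<in>hom C A B. \<forall>h\<in>Mor C.
         tenM C (madd C f g) h = madd C (tenM C f h) (tenM C g h) \<and>
         tenM C h (madd C f g) = madd C (tenM C h f) (tenM C h g)"
  using mt[unfolded is_monoidal_triangulated_def] by (elim conjE)
lemma mt_assoc: "\<forall>A\<in>Ob C. \<forall>B\<in>Ob C. \<forall>D\<in>Ob C.
         assoc C A B D \<in> hom C (tenO C (tenO C A B) D) (tenO C A (tenO C B D)) \<and>
         is_iso C (assoc C A B D)"
  using mt[unfolded is_monoidal_triangulated_def] by (elim conjE)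
lemma mt_unit: "\<forall>A\<in>Ob C. lunit C A \<in> hom C (tenO C (unitO C) A) A \<and> is_iso C (lunit C A) \<and>
                runit C A \<in> hom C (tenO C A (unitO C)) A \<and> is_iso C (runit C A)"
  using mt[unfolded is_monoidal_triangulated_def] by (elim conjE)
lemma mt_tw: "\<forall>A\<in>Ob C. \<forall>B\<in>Ob C.
         ltw C A B \<in> hom C (tenO C (shO C A) B) (shO C (tenO C A B)) \<and> is_iso C (ltw C A B) \<and>
         rtw C A B \<in> hom C (tenO C A (shO C B)) (shO C (tenO C A B)) \<and> is_iso C (rtw C A B)"
  using mt[unfolded is_monoidal_triangulated_def] by (elim conjE)
lemma mt_tendist: "\<forall>B\<in>Ob C. \<forall>f g h. (f,g,h) \<in> Dist C \<longrightarrow>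
         (tenM C f (idm C B), tenM C g (idm C B), cmp C (ltw C (mdom C f) B) (tenM C h (idm C B))) \<in> Dist C \<and>
         (tenM C (idm C B) f, tenM C (idm C B) g, cmp C (rtw C B (mdom C f)) (tenM C (idm C B) h)) \<in> Dist C"
  using mt[unfolded is_monoidal_triangulated_def] by (elim conjE)

lemma ten_ob: "A \<in> Ob C \<Longrightarrow> B \<in> Ob C \<Longrightarrow> tenO C A B \<in> Ob C"
  using mt_tenO by blast

lemma tenM_hom: "f \<in> hom C A B \<Longrightarrow> g \<in> hom C A' B' \<Longrightarrow> tenM C f g \<in> hom C (tenO C A A') (tenO C B B')"
  using mt_tenM hom_ob by blast

lemma tenM_id: "A \<in> Ob C \<Longrightarrow> B \<in> Ob C \<Longrightarrow> tenM C (idm C A) (idm C B) = idm C (tenO C A B)"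
  using mt_tenid by blast

lemma tenM_comp: "f \<in> hom C A B \<Longrightarrow> g \<in> hom C B D \<Longrightarrow> f' \<in> hom C A' B' \<Longrightarrow> g' \<in> hom C B' D' \<Longrightarrow>
   tenM C (cmp C g f) (cmp C g' f') = cmp C (tenM C g g') (tenM C f f')"
  using mt_tencomp unfolding hom_iff by auto

lemma tenM_add_l: "f \<in> hom C A B \<Longrightarrow> g \<in> hom C A B \<Longrightarrow> h \<in> Mor C \<Longrightarrow>
   tenM C (madd C f g) h = madd C (tenM C f h) (tenM C g h)"
  using mt_tenadd hom_ob by blast

lemma tenM_add_r: "f \<in> hom C A B \<Longrightarrow> g \<in> hom C A B \<Longrightarrow> h \<in> Mor C \<Longrightarrow>
   tenM C h (madd C f g) = madd C (tenM C h f) (tenM C h g)"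
  using mt_tenadd hom_ob by blast

lemma tenM_zero_l: assumes "A \<in> Ob C" "B \<in> Ob C" "h \<in> hom C A' B'"
  shows "tenM C (mzero C A B) h = mzero C (tenO C A A') (tenO C B B')"
proof -
  have z: "mzero C A B \<in> hom C A B" using zero_hom assms by blast
  have hm: "h \<in> Mor C" using assms hom_iff by blast
  have "tenM C (mzero C A B) h = tenM C (madd C (mzero C A B) (mzero C A B)) h" using zero_zero assms by simp
  also have "\<dots> = madd C (tenM C (mzero C A B) h) (tenM C (mzero C A B) h)" using tenM_add_l z hm by blast
  finally show ?thesis using idem_zero[OF tenM_hom[OF z assms(3)]] by metis
qed

lemma tenM_zero_r: assumes "A \<in> Ob C" "B \<in> Ob C" "h \<in> hom C A' B'"
  shows "tenM C h (mzero C A B) = mzero C (tenO C A' A) (tenO C B' B)"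
proof -
  have z: "mzero C A B \<in> hom C A B" using zero_hom assms by blast
  have hm: "h \<in> Mor C" using assms hom_iff by blast
  have "tenM C h (mzero C A B) = tenM C h (madd C (mzero C A B) (mzero C A B))" using zero_zero assms by simp
  also have "\<dots> = madd C (tenM C h (mzero C A B)) (tenM C h (mzero C A B))" using tenM_add_r z hm by blast
  finally show ?thesis using idem_zero[OF tenM_hom[OF assms(3) z]] by metis
qed

lemma iso_inv: assumes "is_iso C f" "f \<in> hom C A B"
  shows "\<exists>g\<in>hom C B A. cmp C g f = idm C A \<and> cmp C f g = idm C B"
  using assms unfolding is_iso_def hom_iff by auto

lemma thick_iso': assumes "thick C S" "f \<in> hom C A B" "is_iso C f" shows "A \<in> S \<longleftrightarrow> B \<in> S"
  using iso_inv[OF assms(3,2)] thick_iso_iff[OF assms(1) assms(2)] by blast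

lemma thick_iso_ten_r: assumes S: "thick C S" and f: "f \<in> hom C A B" and i: "is_iso C f" and R: "R \<in> Ob C"
  shows "tenO C A R \<in> S \<longleftrightarrow> tenO C B R \<in> S"
proof -
  obtain g where g: "g \<in> hom C B A" "cmp C g f = idm C A" "cmp C f g = idm C B" using iso_inv[OF i f] by blast
  have A: "A \<in> Ob C" "B \<in> Ob C" using f hom_ob by blast+
  have iR: "idm C R \<in> hom C R R" using id_hom R by blast
  have "cmp C (tenM C g (idm C R)) (tenM C f (idm C R)) = tenM C (cmp C g f) (cmp C (idm C R) (idm C R))"
    using tenM_comp[OF f g(1) iR iR] by simp
  also have "\<dots> = idm C (tenO C A R)" using g(2) id_l[OF iR] tenM_id A R by simp
  finally have e1: "cmp C (tenM C g (idm C R)) (tenM C f (idm C R)) = idm C (tenO C A R)" .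
  have "cmp C (tenM C f (idm C R)) (tenM C g (idm C R)) = tenM C (cmp C f g) (cmp C (idm C R) (idm C R))"
    using tenM_comp[OF g(1) f iR iR] by simp
  also have "\<dots> = idm C (tenO C B R)" using g(3) id_l[OF iR] tenM_id A R by simp
  finally have e2: "cmp C (tenM C f (idm C R)) (tenM C g (idm C R)) = idm C (tenO C B R)" .
  show ?thesis using thick_iso_iff[OF S tenM_hom[OF f iR] tenM_hom[OF g(1) iR] e1 e2] .
qed

lemma thick_iso_ten_l: assumes S: "thick C S" and f: "f \<in> hom C A B" and i: "is_iso C f" and R: "R \<in> Ob C"
  shows "tenO C R A \<in> S \<longleftrightarrow> tenO C R B \<in> S"
proof -
  obtain g where g: "g \<in> hom C B A" "cmp C g f = idm C A" "cmp C f g = idm C B" using iso_inv[OF i f] by blast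
  have A: "A \<in> Ob C" "B \<in> Ob C" using f hom_ob by blast+
  have iR: "idm C R \<in> hom C R R" using id_hom R by blast
  have "cmp C (tenM C (idm C R) g) (tenM C (idm C R) f) = tenM C (cmp C (idm C R) (idm C R)) (cmp C g f)"
    using tenM_comp[OF iR iR f g(1)] by simp
  also have "\<dots> = idm C (tenO C R A)" using g(2) id_l[OF iR] tenM_id A R by simp
  finally have e1: "cmp C (tenM C (idm C R) g) (tenM C (idm C R) f) = idm C (tenO C R A)" .
  have "cmp C (tenM C (idm C R) f) (tenM C (idm C R) g) = tenM C (cmp C (idm C R) (idm C R)) (cmp C f g)"
    using tenM_comp[OF iR iR g(1) f] by simp
  also have "\<dots> = idm C (tenO C R B)" using g(3) id_l[OF iR] tenM_id A R by simp
  finally have e2: "cmp C (tenM C (idm C R) f) (tenM C (idm C R) g) = idm C (tenO C R B)" .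
  show ?thesis using thick_iso_iff[OF S tenM_hom[OF iR f] tenM_hom[OF iR g(1)] e1 e2] .
qed

lemma zero_ten_r: assumes "is_zero_obj C Z" "R \<in> Ob C" shows "is_zero_obj C (tenO C Z R)"
proof -
  have ZO: "Z \<in> Ob C" using assms unfolding is_zero_obj_def by blast
  have "idm C (tenO C Z R) = tenM C (idm C Z) (idm C R)" using tenM_id ZO assms by simp
  also have "\<dots> = tenM C (mzero C Z Z) (idm C R)" using assms unfolding is_zero_obj_def by simp
  also have "\<dots> = mzero C (tenO C Z R) (tenO C Z R)" using tenM_zero_l ZO id_hom assms by blast
  finally show ?thesis unfolding is_zero_obj_def using ten_ob ZO assms by blast
qed

lemma zero_ten_l: assumes "is_zero_obj C Z" "R \<in> Ob C" shows "is_zero_obj C (tenO C R Z)"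
proof -
  have ZO: "Z \<in> Ob C" using assms unfolding is_zero_obj_def by blast
  have "idm C (tenO C R Z) = tenM C (idm C R) (idm C Z)" using tenM_id ZO assms by simp
  also have "\<dots> = tenM C (idm C R) (mzero C Z Z)" using assms unfolding is_zero_obj_def by simp
  also have "\<dots> = mzero C (tenO C R Z) (tenO C R Z)" using tenM_zero_r ZO id_hom assms by blast
  finally show ?thesis unfolding is_zero_obj_def using ten_ob ZO assms by blast
qed

lemma biprod_ten_r: assumes bp: "is_biprod C A A' B i1 p1 i2 p2" and R: "R \<in> Ob C"
  shows "is_biprod C (tenO C A R) (tenO C A' R) (tenO C B R) (tenM C i1 (idm C R)) (tenM C p1 (idm C R))
     (tenM C i2 (idm C R)) (tenM C p2 (idm C R))"
proof -
  have i1: "i1 \<in> hom C A B" and p1: "p1 \<in> hom C B A" and i2: "i2 \<in> hom C A' B" and p2: "p2 \<in> hom C B A'"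
    and p1i1: "cmp C p1 i1 = idm C A" and p2i2: "cmp C p2 i2 = idm C A'"
    and p1i2: "cmp C p1 i2 = mzero C A' A" and p2i1: "cmp C p2 i1 = mzero C A A'"
    and sumid: "madd C (cmp C i1 p1) (cmp C i2 p2) = idm C B"
    using bp unfolding is_biprod_def by blast+
  have O: "A \<in> Ob C" "A' \<in> Ob C" "B \<in> Ob C" using i1 i2 hom_ob by blast+
  have iR: "idm C R \<in> hom C R R" using id_hom R by blast
  have iRR: "cmp C (idm C R) (idm C R) = idm C R" using id_l iR by blast
  have a1: "cmp C (tenM C p1 (idm C R)) (tenM C i1 (idm C R)) = idm C (tenO C A R)"
    using tenM_comp[OF i1 p1 iR iR, symmetric] p1i1 iRR tenM_id O R by simp
  have a2: "cmp C (tenM C p2 (idm C R)) (tenM C i2 (idm C R)) = idm C (tenO C A' R)"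
    using tenM_comp[OF i2 p2 iR iR, symmetric] p2i2 iRR tenM_id O R by simp
  have a3: "cmp C (tenM C p1 (idm C R)) (tenM C i2 (idm C R)) = mzero C (tenO C A' R) (tenO C A R)"
    using tenM_comp[OF i2 p1 iR iR, symmetric] p1i2 iRR tenM_zero_l O iR by simp
  have a4: "cmp C (tenM C p2 (idm C R)) (tenM C i1 (idm C R)) = mzero C (tenO C A R) (tenO C A' R)"
    using tenM_comp[OF i1 p2 iR iR, symmetric] p2i1 iRR tenM_zero_l O iR by simp
  have c1: "cmp C i1 p1 \<in> hom C B B" and c2: "cmp C i2 p2 \<in> hom C B B" using comp_hom i1 p1 i2 p2 by blast+
  have "madd C (cmp C (tenM C i1 (idm C R)) (tenM C p1 (idm C R))) (cmp C (tenM C i2 (idm C R)) (tenM C p2 (idm C R)))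
      = madd C (tenM C (cmp C i1 p1) (idm C R)) (tenM C (cmp C i2 p2) (idm C R))"
    using tenM_comp[OF p1 i1 iR iR] tenM_comp[OF p2 i2 iR iR] iRR by simp
  also have "\<dots> = tenM C (madd C (cmp C i1 p1) (cmp C i2 p2)) (idm C R)"
    using tenM_add_l[OF c1 c2] iR hom_iff by auto
  also have "\<dots> = idm C (tenO C B R)" using sumid tenM_id O R by simp
  finally have a5: "madd C (cmp C (tenM C i1 (idm C R)) (tenM C p1 (idm C R))) (cmp C (tenM C i2 (idm C R)) (tenM C p2 (idm C R)))
      = idm C (tenO C B R)" .
  show ?thesis unfolding is_biprod_def
    using tenM_hom[OF i1 iR] tenM_hom[OF p1 iR] tenM_hom[OF i2 iR] tenM_hom[OF p2 iR] a1 a2 a3 a4 a5 by blast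
qed

lemma biprod_ten_l: assumes bp: "is_biprod C A A' B i1 p1 i2 p2" and R: "R \<in> Ob C"
  shows "is_biprod C (tenO C R A) (tenO C R A') (tenO C R B) (tenM C (idm C R) i1) (tenM C (idm C R) p1)
     (tenM C (idm C R) i2) (tenM C (idm C R) p2)"
proof -
  have i1: "i1 \<in> hom C A B" and p1: "p1 \<in> hom C B A" and i2: "i2 \<in> hom C A' B" and p2: "p2 \<in> hom C B A'"
    and p1i1: "cmp C p1 i1 = idm C A" and p2i2: "cmp C p2 i2 = idm C A'"
    and p1i2: "cmp C p1 i2 = mzero C A' A" and p2i1: "cmp C p2 i1 = mzero C A A'"
    and sumid: "madd C (cmp C i1 p1) (cmp C i2 p2) = idm C B"
    using bp unfolding is_biprod_def by blast+
  have O: "A \<in> Ob C" "A' \<in> Ob C" "B \<in> Ob C" using i1 i2 hom_ob by blast+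
  have iR: "idm C R \<in> hom C R R" using id_hom R by blast
  have iRR: "cmp C (idm C R) (idm C R) = idm C R" using id_l iR by blast
  have a1: "cmp C (tenM C (idm C R) p1) (tenM C (idm C R) i1) = idm C (tenO C R A)"
    using tenM_comp[OF iR iR i1 p1, symmetric] p1i1 iRR tenM_id O R by simp
  have a2: "cmp C (tenM C (idm C R) p2) (tenM C (idm C R) i2) = idm C (tenO C R A')"
    using tenM_comp[OF iR iR i2 p2, symmetric] p2i2 iRR tenM_id O R by simp
  have a3: "cmp C (tenM C (idm C R) p1) (tenM C (idm C R) i2) = mzero C (tenO C R A') (tenO C R A)"
    using tenM_comp[OF iR iR i2 p1, symmetric] p1i2 iRR tenM_zero_r O iR by simp
  have a4: "cmp C (tenM C (idm C R) p2) (tenM C (idm C R) i1) = mzero C (tenO C R A) (tenO C R A')"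
    using tenM_comp[OF iR iR i1 p2, symmetric] p2i1 iRR tenM_zero_r O iR by simp
  have c1: "cmp C i1 p1 \<in> hom C B B" and c2: "cmp C i2 p2 \<in> hom C B B" using comp_hom i1 p1 i2 p2 by blast+
  have "madd C (cmp C (tenM C (idm C R) i1) (tenM C (idm C R) p1)) (cmp C (tenM C (idm C R) i2) (tenM C (idm C R) p2))
      = madd C (tenM C (idm C R) (cmp C i1 p1)) (tenM C (idm C R) (cmp C i2 p2))"
    using tenM_comp[OF iR iR p1 i1] tenM_comp[OF iR iR p2 i2] iRR by simp
  also have "\<dots> = tenM C (idm C R) (madd C (cmp C i1 p1) (cmp C i2 p2))"
    using tenM_add_r[OF c1 c2] iR hom_iff by auto
  also have "\<dots> = idm C (tenO C R B)" using sumid tenM_id O R by simp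
  finally have a5: "madd C (cmp C (tenM C (idm C R) i1) (tenM C (idm C R) p1)) (cmp C (tenM C (idm C R) i2) (tenM C (idm C R) p2))
      = idm C (tenO C R B)" .
  show ?thesis unfolding is_biprod_def
    using tenM_hom[OF iR i1] tenM_hom[OF iR p1] tenM_hom[OF iR i2] tenM_hom[OF iR p2] a1 a2 a3 a4 a5 by blast
qed

lemma thick_pre_r: assumes S: "thick C S" and R: "R \<in> Ob C"
  shows "thick C {X \<in> Ob C. tenO C X R \<in> S}"
  unfolding thick_def
proof (intro conjI)
  show "{X \<in> Ob C. tenO C X R \<in> S} \<subseteq> Ob C" by blast
  obtain Z where Z: "is_zero_obj C Z" using zero_ex by blast
  have "Z \<in> Ob C" using Z unfolding is_zero_obj_def by blast
  moreover have "tenO C Z R \<in> S" using thick_all_zero[OF S zero_ten_r[OF Z R]] .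
  ultimately show "\<exists>Z\<in>{X \<in> Ob C. tenO C X R \<in> S}. is_zero_obj C Z" using Z by blast
  show "\<forall>A\<in>Ob C. (shO C A \<in> {X \<in> Ob C. tenO C X R \<in> S}) = (A \<in> {X \<in> Ob C. tenO C X R \<in> S})"
  proof
    fix A assume A: "A \<in> Ob C"
    have t: "ltw C A R \<in> hom C (tenO C (shO C A) R) (shO C (tenO C A R))" "is_iso C (ltw C A R)"
      using mt_tw A R by blast+
    have "tenO C (shO C A) R \<in> S \<longleftrightarrow> shO C (tenO C A R) \<in> S" using thick_iso'[OF S t] .
    also have "\<dots> \<longleftrightarrow> tenO C A R \<in> S" using thick_sh[OF S] ten_ob A R by blast
    finally show "(shO C A \<in> {X \<in> Ob C. tenO C X R \<in> S}) = (A \<in> {X \<in> Ob C. tenO C X R \<in> S})"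
      using A sh_ob by blast
  qed
  show "\<forall>f g h. (f, g, h) \<in> Dist C \<and> mdom C f \<in> {X \<in> Ob C. tenO C X R \<in> S} \<and> mdom C g \<in> {X \<in> Ob C. tenO C X R \<in> S}
      \<longrightarrow> mcod C g \<in> {X \<in> Ob C. tenO C X R \<in> S}"
  proof (intro allI impI)
    fix f g h assume a: "(f, g, h) \<in> Dist C \<and> mdom C f \<in> {X \<in> Ob C. tenO C X R \<in> S} \<and> mdom C g \<in> {X \<in> Ob C. tenO C X R \<in> S}"
    then have d: "(f,g,h) \<in> Dist C" by blast
    have d': "(tenM C f (idm C R), tenM C g (idm C R), cmp C (ltw C (mdom C f) R) (tenM C h (idm C R))) \<in> Dist C"
      using mt_tendist R d by blast
    have hf: "f \<in> hom C (mdom C f) (mdom C g)" and hg: "g \<in> hom C (mdom C g) (mdom C h)"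
      using dist_hom[OF d] by auto
    have iR: "idm C R \<in> hom C R R" using id_hom R by blast
    have m1: "mdom C (tenM C f (idm C R)) = tenO C (mdom C f) R" using tenM_hom[OF hf iR] hom_iff by blast
    have m2: "mdom C (tenM C g (idm C R)) = tenO C (mdom C g) R" using tenM_hom[OF hg iR] hom_iff by blast
    have m3: "mcod C (tenM C g (idm C R)) = tenO C (mdom C h) R" using tenM_hom[OF hg iR] hom_iff by blast
    have "mcod C (tenM C g (idm C R)) \<in> S" using thick_ext[OF S d'] m1 m2 a by auto
    moreover have "mcod C g = mdom C h" "mdom C h \<in> Ob C" using hg hom_iff hom_ob by blast+
    ultimately show "mcod C g \<in> {X \<in> Ob C. tenO C X R \<in> S}" using m3 by auto
  qed
  show "\<forall>A B. is_summand C A B \<and> B \<in> {X \<in> Ob C. tenO C X R \<in> S} \<longrightarrow> A \<in> {X \<in> Ob C. tenO C X R \<in> S}"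
  proof (intro allI impI)
    fix A B assume a: "is_summand C A B \<and> B \<in> {X \<in> Ob C. tenO C X R \<in> S}"
    then obtain A' i1 p1 i2 p2 where bp: "is_biprod C A A' B i1 p1 i2 p2" "A' \<in> Ob C" "A \<in> Ob C"
      unfolding is_summand_def by blast
    have "is_summand C (tenO C A R) (tenO C B R)"
      using biprod_summand1[OF biprod_ten_r[OF bp(1) R]] ten_ob bp R by blast
    then show "A \<in> {X \<in> Ob C. tenO C X R \<in> S}" using thick_summand[OF S] a bp by blast
  qed
qed

lemma thick_pre_l: assumes S: "thick C S" and R: "R \<in> Ob C"
  shows "thick C {X \<in> Ob C. tenO C R X \<in> S}"
  unfolding thick_def
proof (intro conjI)
  show "{X \<in> Ob C. tenO C R X \<in> S} \<subseteq> Ob C" by blast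
  obtain Z where Z: "is_zero_obj C Z" using zero_ex by blast
  have "Z \<in> Ob C" using Z unfolding is_zero_obj_def by blast
  moreover have "tenO C R Z \<in> S" using thick_all_zero[OF S zero_ten_l[OF Z R]] .
  ultimately show "\<exists>Z\<in>{X \<in> Ob C. tenO C R X \<in> S}. is_zero_obj C Z" using Z by blast
  show "\<forall>A\<in>Ob C. (shO C A \<in> {X \<in> Ob C. tenO C R X \<in> S}) = (A \<in> {X \<in> Ob C. tenO C R X \<in> S})"
  proof
    fix A assume A: "A \<in> Ob C"
    have t: "rtw C R A \<in> hom C (tenO C R (shO C A)) (shO C (tenO C R A))" "is_iso C (rtw C R A)"
      using mt_tw A R by blast+
    have "tenO C R (shO C A) \<in> S \<longleftrightarrow> shO C (tenO C R A) \<in> S" using thick_iso'[OF S t] .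
    also have "\<dots> \<longleftrightarrow> tenO C R A \<in> S" using thick_sh[OF S] ten_ob A R by blast
    finally show "(shO C A \<in> {X \<in> Ob C. tenO C R X \<in> S}) = (A \<in> {X \<in> Ob C. tenO C R X \<in> S})"
      using A sh_ob by blast
  qed
  show "\<forall>f g h. (f, g, h) \<in> Dist C \<and> mdom C f \<in> {X \<in> Ob C. tenO C R X \<in> S} \<and> mdom C g \<in> {X \<in> Ob C. tenO C R X \<in> S}
      \<longrightarrow> mcod C g \<in> {X \<in> Ob C. tenO C R X \<in> S}"
  proof (intro allI impI)
    fix f g h assume a: "(f, g, h) \<in> Dist C \<and> mdom C f \<in> {X \<in> Ob C. tenO C R X \<in> S} \<and> mdom C g \<in> {X \<in> Ob C. tenO C R X \<in> S}"
    then have d: "(f,g,h) \<in> Dist C" by blast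
    have d': "(tenM C (idm C R) f, tenM C (idm C R) g, cmp C (rtw C R (mdom C f)) (tenM C (idm C R) h)) \<in> Dist C"
      using mt_tendist R d by blast
    have hf: "f \<in> hom C (mdom C f) (mdom C g)" and hg: "g \<in> hom C (mdom C g) (mdom C h)"
      using dist_hom[OF d] by auto
    have iR: "idm C R \<in> hom C R R" using id_hom R by blast
    have m1: "mdom C (tenM C (idm C R) f) = tenO C R (mdom C f)" using tenM_hom[OF iR hf] hom_iff by blast
    have m2: "mdom C (tenM C (idm C R) g) = tenO C R (mdom C g)" using tenM_hom[OF iR hg] hom_iff by blast
    have m3: "mcod C (tenM C (idm C R) g) = tenO C R (mdom C h)" using tenM_hom[OF iR hg] hom_iff by blast
    have "mcod C (tenM C (idm C R) g) \<in> S" using thick_ext[OF S d'] m1 m2 a by auto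
    moreover have "mcod C g = mdom C h" "mdom C h \<in> Ob C" using hg hom_iff hom_ob by blast+
    ultimately show "mcod C g \<in> {X \<in> Ob C. tenO C R X \<in> S}" using m3 by auto
  qed
  show "\<forall>A B. is_summand C A B \<and> B \<in> {X \<in> Ob C. tenO C R X \<in> S} \<longrightarrow> A \<in> {X \<in> Ob C. tenO C R X \<in> S}"
  proof (intro allI impI)
    fix A B assume a: "is_summand C A B \<and> B \<in> {X \<in> Ob C. tenO C R X \<in> S}"
    then obtain A' i1 p1 i2 p2 where bp: "is_biprod C A A' B i1 p1 i2 p2" "A' \<in> Ob C" "A \<in> Ob C"
      unfolding is_summand_def by blast
    have "is_summand C (tenO C R A) (tenO C R B)"
      using biprod_summand1[OF biprod_ten_l[OF bp(1) R]] ten_ob bp R by blast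
    then show "A \<in> {X \<in> Ob C. tenO C R X \<in> S}" using thick_summand[OF S] a bp by blast
  qed
qed

end

context MTC
begin

lemma thick_Ob: "thick C (Ob C)"
  unfolding thick_def
proof (intro conjI)
  show "Ob C \<subseteq> Ob C" by simp
  obtain Z where Z: "is_zero_obj C Z" using zero_ex by blast
  then show "\<exists>Z\<in>Ob C. is_zero_obj C Z" unfolding is_zero_obj_def by blast
  show "\<forall>A\<in>Ob C. (shO C A \<in> Ob C) = (A \<in> Ob C)" using sh_ob by blast
  show "\<forall>f g h. (f, g, h) \<in> Dist C \<and> mdom C f \<in> Ob C \<and> mdom C g \<in> Ob C \<longrightarrow> mcod C g \<in> Ob C"
    using dist_hom hom_ob hom_iff by metis
  show "\<forall>A B. is_summand C A B \<and> B \<in> Ob C \<longrightarrow> A \<in> Ob C" unfolding is_summand_def by blast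
qed

lemma thick_ideal_Ob: "thick_ideal C (Ob C)"
  unfolding thick_ideal_def using thick_Ob ten_ob by blast

lemma thick_Inter: assumes "\<forall>T\<in>\<T>. thick C T" shows "thick C (Ob C \<inter> \<Inter>\<T>)"
  unfolding thick_def
proof (intro conjI)
  show "Ob C \<inter> \<Inter>\<T> \<subseteq> Ob C" by blast
  obtain Z where Z: "is_zero_obj C Z" using zero_ex by blast
  then have "Z \<in> Ob C \<inter> \<Inter>\<T>" using thick_all_zero assms unfolding is_zero_obj_def by blast
  then show "\<exists>Z\<in>Ob C \<inter> \<Inter>\<T>. is_zero_obj C Z" using Z by blast
  show "\<forall>A\<in>Ob C. (shO C A \<in> Ob C \<inter> \<Inter>\<T>) = (A \<in> Ob C \<inter> \<Inter>\<T>)"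
  proof
    fix A assume A: "A \<in> Ob C"
    have "\<forall>T\<in>\<T>. shO C A \<in> T \<longleftrightarrow> A \<in> T" using thick_sh assms A by blast
    then show "(shO C A \<in> Ob C \<inter> \<Inter>\<T>) = (A \<in> Ob C \<inter> \<Inter>\<T>)" using A sh_ob by blast
  qed
  show "\<forall>f g h. (f, g, h) \<in> Dist C \<and> mdom C f \<in> Ob C \<inter> \<Inter>\<T> \<and> mdom C g \<in> Ob C \<inter> \<Inter>\<T> \<longrightarrow> mcod C g \<in> Ob C \<inter> \<Inter>\<T>"
  proof (intro allI impI)
    fix f g h assume a: "(f, g, h) \<in> Dist C \<and> mdom C f \<in> Ob C \<inter> \<Inter>\<T> \<and> mdom C g \<in> Ob C \<inter> \<Inter>\<T>"
    have "\<forall>T\<in>\<T>. mcod C g \<in> T"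
    proof
      fix T assume T: "T \<in> \<T>"
      then have "thick C T" using assms by blast
      then show "mcod C g \<in> T" using thick_ext[of T f g h] a T by blast
    qed
    moreover have "mcod C g \<in> Ob C" using thick_ext[OF thick_Ob, of f g h] a by blast
    ultimately show "mcod C g \<in> Ob C \<inter> \<Inter>\<T>" by blast
  qed
  show "\<forall>A B. is_summand C A B \<and> B \<in> Ob C \<inter> \<Inter>\<T> \<longrightarrow> A \<in> Ob C \<inter> \<Inter>\<T>"
  proof (intro allI impI)
    fix A B assume a: "is_summand C A B \<and> B \<in> Ob C \<inter> \<Inter>\<T>"
    have "\<forall>T\<in>\<T>. A \<in> T"
    proof
      fix T assume T: "T \<in> \<T>"
      then have "thick C T" using assms by blast
      then show "A \<in> T" using thick_summand[of T A B] a T by blast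
    qed
    moreover have "A \<in> Ob C" using a unfolding is_summand_def by blast
    ultimately show "A \<in> Ob C \<inter> \<Inter>\<T>" by blast
  qed
qed

lemma thick_ideal_Inter: assumes "\<forall>T\<in>\<T>. thick_ideal C T" shows "thick_ideal C (Ob C \<inter> \<Inter>\<T>)"
proof -
  have "thick C (Ob C \<inter> \<Inter>\<T>)" using thick_Inter[of \<T>] assms unfolding thick_ideal_def by blast
  moreover have "\<forall>A\<in>Ob C \<inter> \<Inter>\<T>. \<forall>B\<in>Ob C. tenO C A B \<in> Ob C \<inter> \<Inter>\<T> \<and> tenO C B A \<in> Ob C \<inter> \<Inter>\<T>"
  proof (intro ballI conjI)
    fix A B assume A: "A \<in> Ob C \<inter> \<Inter>\<T>" and B: "B \<in> Ob C"
    show "tenO C A B \<in> Ob C \<inter> \<Inter>\<T>" using A B assms ten_ob unfolding thick_ideal_def by blast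
    show "tenO C B A \<in> Ob C \<inter> \<Inter>\<T>" using A B assms ten_ob unfolding thick_ideal_def by blast
  qed
  ultimately show ?thesis unfolding thick_ideal_def by blast
qed

definition ideal_gen :: "'o set \<Rightarrow> 'o set" where
  "ideal_gen X = Ob C \<inter> \<Inter>{I. thick_ideal C I \<and> X \<subseteq> I}"

lemma ideal_gen_ideal: "thick_ideal C (ideal_gen X)"
  unfolding ideal_gen_def by (rule thick_ideal_Inter) blast

lemma ideal_gen_sup: "X \<subseteq> Ob C \<Longrightarrow> X \<subseteq> ideal_gen X"
  unfolding ideal_gen_def by blast

lemma ideal_gen_least: "thick_ideal C I \<Longrightarrow> X \<subseteq> I \<Longrightarrow> ideal_gen X \<subseteq> I"
  unfolding ideal_gen_def by blast

lemma ideal_sub: "thick_ideal C I \<Longrightarrow> I \<subseteq> Ob C"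
  unfolding thick_ideal_def using thick_sub by blast

lemma ideal_l: "thick_ideal C I \<Longrightarrow> A \<in> I \<Longrightarrow> B \<in> Ob C \<Longrightarrow> tenO C A B \<in> I"
  unfolding thick_ideal_def by blast
lemma ideal_r: "thick_ideal C I \<Longrightarrow> A \<in> I \<Longrightarrow> B \<in> Ob C \<Longrightarrow> tenO C B A \<in> I"
  unfolding thick_ideal_def by blast
lemma ideal_thick: "thick_ideal C I \<Longrightarrow> thick C I"
  unfolding thick_ideal_def by blast

lemma assoc_iso: "A \<in> Ob C \<Longrightarrow> B \<in> Ob C \<Longrightarrow> D \<in> Ob C \<Longrightarrow>
    assoc C A B D \<in> hom C (tenO C (tenO C A B) D) (tenO C A (tenO C B D)) \<and> is_iso C (assoc C A B D)"
  using mt_assoc by blast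

lemma climb:
  assumes P: "thick_ideal C P" and SX: "SX \<subseteq> Ob C" and SY: "SY \<subseteq> Ob C"
  and H: "\<forall>x\<in>SX. \<forall>c\<in>Ob C. \<forall>y\<in>SY. tenO C (tenO C x c) y \<in> P"
  shows "\<forall>U\<in>ideal_gen SX. \<forall>c\<in>Ob C. \<forall>V\<in>ideal_gen SY. tenO C (tenO C U c) V \<in> P"
proof -
  have PT: "thick C P" using P ideal_thick by blast
  define Q1 where "Q1 = Ob C \<inter> \<Inter>{{V \<in> Ob C. tenO C (tenO C x c) V \<in> P} | x c. x \<in> SX \<and> c \<in> Ob C}"
  have Q1t: "thick C Q1" unfolding Q1_def
    apply (rule thick_Inter)
    using thick_pre_l[OF PT] ten_ob SX by blast
  have Q1i: "thick_ideal C Q1" unfolding thick_ideal_def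
  proof (intro conjI ballI)
    show "thick C Q1" by (rule Q1t)
    fix V D assume V: "V \<in> Q1" and D: "D \<in> Ob C"
    have VO: "V \<in> Ob C" using V Q1_def by blast
    have HV: "\<forall>x\<in>SX. \<forall>c\<in>Ob C. tenO C (tenO C x c) V \<in> P" using V unfolding Q1_def by blast
    have "\<forall>x\<in>SX. \<forall>c\<in>Ob C. tenO C (tenO C x c) (tenO C V D) \<in> P"
    proof (intro ballI)
      fix x c assume x: "x \<in> SX" and c: "c \<in> Ob C"
      have xc: "tenO C x c \<in> Ob C" using ten_ob x c SX by blast
      have "tenO C (tenO C (tenO C x c) V) D \<in> P" using ideal_l[OF P] HV x c D by blast
      then show "tenO C (tenO C x c) (tenO C V D) \<in> P"
        using thick_iso'[OF PT] assoc_iso[OF xc VO D] by blast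
    qed
    then show "tenO C V D \<in> Q1" unfolding Q1_def using ten_ob VO D by blast
    have "\<forall>x\<in>SX. \<forall>c\<in>Ob C. tenO C (tenO C x c) (tenO C D V) \<in> P"
    proof (intro ballI)
      fix x c assume x: "x \<in> SX" and c: "c \<in> Ob C"
      have xO: "x \<in> Ob C" using x SX by blast
      have xc: "tenO C x c \<in> Ob C" using ten_ob xO c by blast
      have cD: "tenO C c D \<in> Ob C" using ten_ob c D by blast
      have "tenO C (tenO C x (tenO C c D)) V \<in> P" using HV x cD by blast
      then have "tenO C (tenO C (tenO C x c) D) V \<in> P"
        using thick_iso_ten_r[OF PT _ _ VO] assoc_iso[OF xO c D] by blast
      then show "tenO C (tenO C x c) (tenO C D V) \<in> P"
        using thick_iso'[OF PT] assoc_iso[OF xc D VO] by blast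
    qed
    then show "tenO C D V \<in> Q1" unfolding Q1_def using ten_ob VO D by blast
  qed
  have "SY \<subseteq> Q1" unfolding Q1_def using SY H by blast
  then have GY: "ideal_gen SY \<subseteq> Q1" using ideal_gen_least Q1i by blast
  define Q2 where "Q2 = Ob C \<inter> \<Inter>{{U \<in> Ob C. tenO C (tenO C U c) V \<in> P} | V c. V \<in> ideal_gen SY \<and> c \<in> Ob C}"
  have GYO: "ideal_gen SY \<subseteq> Ob C" using ideal_sub ideal_gen_ideal by blast
  have pre2: "thick C {U \<in> Ob C. tenO C (tenO C U c) V \<in> P}" if "V \<in> Ob C" "c \<in> Ob C" for V c
  proof -
    have t1: "thick C {Y \<in> Ob C. tenO C Y V \<in> P}" using thick_pre_r[OF PT that(1)] .
    have "thick C {U \<in> Ob C. tenO C U c \<in> {Y \<in> Ob C. tenO C Y V \<in> P}}" using thick_pre_r[OF t1 that(2)] .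
    moreover have "{U \<in> Ob C. tenO C U c \<in> {Y \<in> Ob C. tenO C Y V \<in> P}} = {U \<in> Ob C. tenO C (tenO C U c) V \<in> P}"
      using ten_ob that by blast
    ultimately show ?thesis by simp
  qed
  have Q2t: "thick C Q2" unfolding Q2_def
    apply (rule thick_Inter)
    using pre2 GYO by blast
  have Q2i: "thick_ideal C Q2" unfolding thick_ideal_def
  proof (intro conjI ballI)
    show "thick C Q2" by (rule Q2t)
    fix U D assume U: "U \<in> Q2" and D: "D \<in> Ob C"
    have UO: "U \<in> Ob C" using U Q2_def by blast
    have HU: "\<forall>V\<in>ideal_gen SY. \<forall>c\<in>Ob C. tenO C (tenO C U c) V \<in> P" using U unfolding Q2_def by blast
    have "\<forall>V\<in>ideal_gen SY. \<forall>c\<in>Ob C. tenO C (tenO C (tenO C U D) c) V \<in> P"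
    proof (intro ballI)
      fix V c assume V: "V \<in> ideal_gen SY" and c: "c \<in> Ob C"
      have VO: "V \<in> Ob C" using V GYO by blast
      have "tenO C (tenO C U (tenO C D c)) V \<in> P" using HU V c D ten_ob by blast
      then show "tenO C (tenO C (tenO C U D) c) V \<in> P"
        using thick_iso_ten_r[OF PT _ _ VO] assoc_iso[OF UO D c] by blast
    qed
    then show "tenO C U D \<in> Q2" unfolding Q2_def using ten_ob UO D by blast
    have "\<forall>V\<in>ideal_gen SY. \<forall>c\<in>Ob C. tenO C (tenO C (tenO C D U) c) V \<in> P"
    proof (intro ballI)
      fix V c assume V: "V \<in> ideal_gen SY" and c: "c \<in> Ob C"
      have VO: "V \<in> Ob C" using V GYO by blast
      have Uc: "tenO C U c \<in> Ob C" using ten_ob UO c by blast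
      have "tenO C D (tenO C (tenO C U c) V) \<in> P" using ideal_r[OF P] HU V c D by blast
      then have "tenO C (tenO C D (tenO C U c)) V \<in> P"
        using thick_iso'[OF PT] assoc_iso[OF D Uc VO] by blast
      then show "tenO C (tenO C (tenO C D U) c) V \<in> P"
        using thick_iso_ten_r[OF PT _ _ VO] assoc_iso[OF D UO c] by blast
    qed
    then show "tenO C D U \<in> Q2" unfolding Q2_def using ten_ob UO D by blast
  qed
  have "SX \<subseteq> Q2" unfolding Q2_def using SX GY Q1_def by blast
  then have "ideal_gen SX \<subseteq> Q2" using ideal_gen_least Q2i by blast
  then show ?thesis unfolding Q2_def by blast
qed

lemma climb_tensor:
  assumes P: "thick_ideal C P" and SX: "SX \<subseteq> Ob C" and SY: "SY \<subseteq> Ob C"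
  and H: "\<forall>x\<in>SX. \<forall>c\<in>Ob C. \<forall>y\<in>SY. tenO C (tenO C x c) y \<in> P"
  shows "tensor_set C (ideal_gen SX) (ideal_gen SY) \<subseteq> P"
proof
  fix w assume "w \<in> tensor_set C (ideal_gen SX) (ideal_gen SY)"
  then obtain U V where w: "w = tenO C U V" "U \<in> ideal_gen SX" "V \<in> ideal_gen SY"
    unfolding tensor_set_def by blast
  have PT: "thick C P" using P ideal_thick by blast
  have UO: "U \<in> Ob C" and VO: "V \<in> Ob C" using w ideal_sub ideal_gen_ideal by blast+
  have "tenO C (tenO C U (unitO C)) V \<in> P" using climb[OF P SX SY H] w unit_ob by blast
  moreover have "runit C U \<in> hom C (tenO C U (unitO C)) U" "is_iso C (runit C U)" using mt_unit UO by blast+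
  ultimately show "w \<in> P" using thick_iso_ten_r[OF PT _ _ VO] w(1) by blast
qed

lemma unit_notin: assumes P: "thick_ideal C P" "P \<noteq> Ob C" shows "unitO C \<notin> P"
proof
  assume u: "unitO C \<in> P"
  have "Ob C \<subseteq> P"
  proof
    fix A assume A: "A \<in> Ob C"
    have "tenO C (unitO C) A \<in> P" using ideal_l[OF P(1) u A] .
    moreover have "lunit C A \<in> hom C (tenO C (unitO C) A) A" "is_iso C (lunit C A)" using mt_unit A by blast+
    ultimately show "A \<in> P" using thick_iso'[OF ideal_thick[OF P(1)]] by blast
  qed
  then show False using P ideal_sub by blast
qed

end

locale MTCG = MTC +
  fixes G
  assumes G: "G \<in> Ob C" and gen: "thick_gen C {G} = Ob C"
begin

lemma gen_all: "thick C S \<Longrightarrow> G \<in> S \<Longrightarrow> Ob C \<subseteq> S"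
  using gen unfolding thick_gen_def by blast

lemma prime_split: assumes P: "prime_ideal C P" and A: "A \<in> Ob C" and B: "B \<in> Ob C"
  and m: "tenO C (tenO C A G) B \<in> P"
  shows "A \<in> P \<or> B \<in> P"
proof -
  have Pi: "thick_ideal C P" using P unfolding prime_ideal_def by blast
  have PT: "thick C P" using Pi ideal_thick by blast
  have t1: "thick C {Y \<in> Ob C. tenO C Y B \<in> P}" using thick_pre_r[OF PT B] .
  have t2: "thick C {X \<in> Ob C. tenO C A X \<in> {Y \<in> Ob C. tenO C Y B \<in> P}}" using thick_pre_l[OF t1 A] .
  have "G \<in> {X \<in> Ob C. tenO C A X \<in> {Y \<in> Ob C. tenO C Y B \<in> P}}" using G m ten_ob A by blast
  then have "Ob C \<subseteq> {X \<in> Ob C. tenO C A X \<in> {Y \<in> Ob C. tenO C Y B \<in> P}}" using gen_all t2 by blast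
  then have H: "\<forall>x\<in>{A}. \<forall>c\<in>Ob C. \<forall>y\<in>{B}. tenO C (tenO C x c) y \<in> P" by blast
  have ts: "tensor_set C (ideal_gen {A}) (ideal_gen {B}) \<subseteq> P"
    using climb_tensor[OF Pi _ _ H] A B by blast
  have "ideal_gen {A} \<subseteq> P \<or> ideal_gen {B} \<subseteq> P"
    using P ts ideal_gen_ideal unfolding prime_ideal_def by blast
  then show ?thesis using ideal_gen_sup A B by blast
qed

lemma Vsupp_int: assumes A: "A \<in> Ob C" and B: "B \<in> Ob C"
  shows "Vsupp C (tenO C (tenO C A G) B) = Vsupp C A \<inter> Vsupp C B"
proof
  show "Vsupp C (tenO C (tenO C A G) B) \<subseteq> Vsupp C A \<inter> Vsupp C B"
  proof
    fix P assume "P \<in> Vsupp C (tenO C (tenO C A G) B)"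
    then have P: "P \<in> Spc C" "tenO C (tenO C A G) B \<notin> P" unfolding Vsupp_def by blast+
    have Pi: "thick_ideal C P" using P unfolding Spc_def prime_ideal_def by blast
    have "A \<notin> P" using ideal_l[OF Pi _ B] ideal_l[OF Pi _ G] P by blast
    moreover have "B \<notin> P" using ideal_r[OF Pi _ ten_ob[OF A G]] P by blast
    ultimately show "P \<in> Vsupp C A \<inter> Vsupp C B" using P unfolding Vsupp_def by blast
  qed
  show "Vsupp C A \<inter> Vsupp C B \<subseteq> Vsupp C (tenO C (tenO C A G) B)"
    using prime_split A B unfolding Vsupp_def Spc_def by blast
qed

lemma Vsupp_unit: "Vsupp C (unitO C) = Spc C"
  unfolding Vsupp_def Spc_def prime_ideal_def using unit_notin by blast

end

context MTC
begin

lemma spc_thick: "P \<in> Spc C \<Longrightarrow> thick C P"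
  unfolding Spc_def prime_ideal_def thick_ideal_def by blast

lemma spc_ideal: "P \<in> Spc C \<Longrightarrow> thick_ideal C P"
  unfolding Spc_def prime_ideal_def by blast

definition bp :: "'o \<Rightarrow> 'o \<Rightarrow> 'o" where
  "bp A B = (SOME E. E \<in> Ob C \<and> (\<exists>i1 p1 i2 p2. is_biprod C A B E i1 p1 i2 p2))"

lemma bp_ok: assumes "A \<in> Ob C" "B \<in> Ob C"
  shows "bp A B \<in> Ob C" "\<exists>i1 p1 i2 p2. is_biprod C A B (bp A B) i1 p1 i2 p2"
proof -
  have "\<exists>E. E \<in> Ob C \<and> (\<exists>i1 p1 i2 p2. is_biprod C A B E i1 p1 i2 p2)" using biprod_ex assms by blast
  then have "bp A B \<in> Ob C \<and> (\<exists>i1 p1 i2 p2. is_biprod C A B (bp A B) i1 p1 i2 p2)"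
    unfolding bp_def by (rule someI_ex)
  then show "bp A B \<in> Ob C" "\<exists>i1 p1 i2 p2. is_biprod C A B (bp A B) i1 p1 i2 p2" by blast+
qed

lemma Vsupp_bp: assumes "A \<in> Ob C" "B \<in> Ob C"
  shows "Vsupp C (bp A B) = Vsupp C A \<union> Vsupp C B"
proof -
  obtain i1 p1 i2 p2 where b: "is_biprod C A B (bp A B) i1 p1 i2 p2" using bp_ok assms by blast
  have "\<forall>P\<in>Spc C. bp A B \<in> P \<longleftrightarrow> A \<in> P \<and> B \<in> P" using thick_biprod_iff[OF spc_thick b] by blast
  then show ?thesis unfolding Vsupp_def by blast
qed

definition spc_open :: "'o set set \<Rightarrow> bool" where
  "spc_open U \<longleftrightarrow> U \<subseteq> Spc C \<and> (\<exists>\<A>. \<A> \<subseteq> Ob C \<and> Spc C - U = Spc C \<inter> \<Inter>(Vsupp C ` \<A>))"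

lemma spc_istop: "istopology spc_open"
  unfolding istopology_def
proof (intro conjI allI impI ballI)
  fix S T assume S: "spc_open S" and T: "spc_open T"
  have "\<exists>\<A>. \<A> \<subseteq> Ob C \<and> Spc C - S = Spc C \<inter> \<Inter>(Vsupp C ` \<A>)" using S unfolding spc_open_def by (elim conjE)
  then obtain \<A> where A: "\<A> \<subseteq> Ob C" "Spc C - S = Spc C \<inter> \<Inter>(Vsupp C ` \<A>)" by (elim exE conjE)
  have "\<exists>\<B>. \<B> \<subseteq> Ob C \<and> Spc C - T = Spc C \<inter> \<Inter>(Vsupp C ` \<B>)" using T unfolding spc_open_def by (elim conjE)
  then obtain \<B> where B: "\<B> \<subseteq> Ob C" "Spc C - T = Spc C \<inter> \<Inter>(Vsupp C ` \<B>)" by (elim exE conjE)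
  define \<C> where "\<C> = (\<lambda>(a,b). bp a b) ` (\<A> \<times> \<B>)"
  have CO: "\<C> \<subseteq> Ob C" unfolding \<C>_def using bp_ok(1) A(1) B(1) by auto
  have VC: "\<Inter>(Vsupp C ` \<C>) = (\<Inter>p\<in>\<A> \<times> \<B>. Vsupp C (fst p) \<union> Vsupp C (snd p))"
    unfolding \<C>_def using Vsupp_bp A(1) B(1) by (auto simp: case_prod_beta subset_iff)
  have "Spc C - (S \<inter> T) = (Spc C - S) \<union> (Spc C - T)" by blast
  also have "\<dots> = Spc C \<inter> (\<Inter>p\<in>\<A> \<times> \<B>. Vsupp C (fst p) \<union> Vsupp C (snd p))"
    unfolding A B
  proof
    show "Spc C \<inter> \<Inter>(Vsupp C ` \<A>) \<union> Spc C \<inter> \<Inter>(Vsupp C ` \<B>)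
      \<subseteq> Spc C \<inter> (\<Inter>p\<in>\<A> \<times> \<B>. Vsupp C (fst p) \<union> Vsupp C (snd p))" by auto
    show "Spc C \<inter> (\<Inter>p\<in>\<A> \<times> \<B>. Vsupp C (fst p) \<union> Vsupp C (snd p))
      \<subseteq> Spc C \<inter> \<Inter>(Vsupp C ` \<A>) \<union> Spc C \<inter> \<Inter>(Vsupp C ` \<B>)"
    proof
      fix P assume P: "P \<in> Spc C \<inter> (\<Inter>p\<in>\<A> \<times> \<B>. Vsupp C (fst p) \<union> Vsupp C (snd p))"
      show "P \<in> Spc C \<inter> \<Inter>(Vsupp C ` \<A>) \<union> Spc C \<inter> \<Inter>(Vsupp C ` \<B>)"
      proof (cases "\<forall>a\<in>\<A>. P \<in> Vsupp C a")
        case True then show ?thesis using P by blast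
      next
        case False
        then obtain a where a: "a \<in> \<A>" "P \<notin> Vsupp C a" by blast
        have "\<forall>b\<in>\<B>. P \<in> Vsupp C b"
        proof
          fix b assume "b \<in> \<B>"
          then have "(a,b) \<in> \<A> \<times> \<B>" using a by blast
          then have "P \<in> Vsupp C a \<union> Vsupp C b" using P by force
          then show "P \<in> Vsupp C b" using a by blast
        qed
        then show ?thesis using P by blast
      qed
    qed
  qed
  finally have e: "Spc C - (S \<inter> T) = Spc C \<inter> \<Inter>(Vsupp C ` \<C>)" using VC by simp
  have sub: "S \<inter> T \<subseteq> Spc C" using S unfolding spc_open_def by auto
  show "spc_open (S \<inter> T)" unfolding spc_open_def by (rule conjI[OF sub], rule exI[where x=\<C>], rule conjI[OF CO e])
next
  fix K assume K: "\<forall>k\<in>K. spc_open k"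
  define F where "F k = (SOME \<A>. \<A> \<subseteq> Ob C \<and> Spc C - k = Spc C \<inter> \<Inter>(Vsupp C ` \<A>))" for k
  have F: "F k \<subseteq> Ob C \<and> Spc C - k = Spc C \<inter> \<Inter>(Vsupp C ` F k)" if "k \<in> K" for k
  proof -
    have "spc_open k" using K that by blast
    then have "\<exists>\<A>. \<A> \<subseteq> Ob C \<and> Spc C - k = Spc C \<inter> \<Inter>(Vsupp C ` \<A>)" unfolding spc_open_def by (elim conjE)
    then show ?thesis unfolding F_def by (rule someI_ex)
  qed
  have e: "Spc C - \<Union>K = Spc C \<inter> \<Inter>(Vsupp C ` (\<Union>k\<in>K. F k))"
  proof
    show "Spc C - \<Union>K \<subseteq> Spc C \<inter> \<Inter>(Vsupp C ` (\<Union>k\<in>K. F k))"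
    proof
      fix P assume P: "P \<in> Spc C - \<Union>K"
      have "P \<in> \<Inter>(Vsupp C ` F k)" if k: "k \<in> K" for k
      proof -
        have eq: "Spc C - k = Spc C \<inter> \<Inter>(Vsupp C ` F k)" using F[OF k] by (elim conjE)
        have "P \<in> Spc C - k" using P k by blast
        then show ?thesis unfolding eq by blast
      qed
      then show "P \<in> Spc C \<inter> \<Inter>(Vsupp C ` (\<Union>k\<in>K. F k))" using P by blast
    qed
    show "Spc C \<inter> \<Inter>(Vsupp C ` (\<Union>k\<in>K. F k)) \<subseteq> Spc C - \<Union>K"
    proof
      fix P assume P: "P \<in> Spc C \<inter> \<Inter>(Vsupp C ` (\<Union>k\<in>K. F k))"
      have "P \<in> Spc C - k" if k: "k \<in> K" for k
      proof -
        have eq: "Spc C - k = Spc C \<inter> \<Inter>(Vsupp C ` F k)" using F[OF k] by (elim conjE)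
        have "P \<in> Spc C \<inter> \<Inter>(Vsupp C ` F k)" using P k by blast
        then show ?thesis unfolding eq .
      qed
      then show "P \<in> Spc C - \<Union>K" using P by blast
    qed
  qed
  have ob: "(\<Union>k\<in>K. F k) \<subseteq> Ob C" using F by auto
  have sub: "\<Union>K \<subseteq> Spc C" using K unfolding spc_open_def by auto
  show "spc_open (\<Union>K)" unfolding spc_open_def by (rule conjI[OF sub], rule exI[where x="\<Union>k\<in>K. F k"], rule conjI[OF ob e])
qed

lemma openin_spc: "openin (spc_top C) = spc_open"
  unfolding spc_top_def using topology_inverse'[OF spc_istop] unfolding spc_open_def by simp

lemma spc_open_Spc: "spc_open (Spc C)"
proof -
  have "Spc C \<inter> \<Inter>(Vsupp C ` Ob C) = {}"
  proof -
    have "P \<notin> \<Inter>(Vsupp C ` Ob C)" if P: "P \<in> Spc C" for P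
    proof -
      obtain Z where "Z \<in> P" "is_zero_obj C Z" using thick_zero_ex spc_thick P by blast
      then show ?thesis unfolding Vsupp_def is_zero_obj_def by blast
    qed
    then show ?thesis by blast
  qed
  then have e: "Spc C - Spc C = Spc C \<inter> \<Inter>(Vsupp C ` Ob C)" by simp
  show ?thesis unfolding spc_open_def by (rule conjI[OF subset_refl], rule exI[where x="Ob C"], rule conjI[OF subset_refl e])
qed

lemma topspace_spc: "topspace (spc_top C) = Spc C"
  unfolding topspace_def openin_spc
proof
  show "\<Union>{S. spc_open S} \<subseteq> Spc C" unfolding spc_open_def by auto
  show "Spc C \<subseteq> \<Union>{S. spc_open S}" using spc_open_Spc by blast
qed

lemma Vsupp_closed: assumes "A \<in> Ob C" shows "closedin (spc_top C) (Vsupp C A)"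
  unfolding closedin_def topspace_spc openin_spc spc_open_def
proof (intro conjI)
  show "Vsupp C A \<subseteq> Spc C" unfolding Vsupp_def by blast
  show "Spc C - Vsupp C A \<subseteq> Spc C" by blast
  have "Spc C - (Spc C - Vsupp C A) = Spc C \<inter> \<Inter>(Vsupp C ` {A})" unfolding Vsupp_def by blast
  moreover have "{A} \<subseteq> Ob C" using assms by blast
  ultimately show "\<exists>\<A>\<subseteq>Ob C. Spc C - (Spc C - Vsupp C A) = Spc C \<inter> \<Inter>(Vsupp C ` \<A>)" by (intro exI[of _ "{A}"] conjI)
qed

end

context MTC
begin

lemma chain_union: assumes ne: "\<C> \<noteq> {}" and I: "\<forall>I\<in>\<C>. thick_ideal C I"
  and ch: "\<forall>I\<in>\<C>. \<forall>J\<in>\<C>. I \<subseteq> J \<or> J \<subseteq> I"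
  shows "thick_ideal C (\<Union>\<C>)"
  unfolding thick_ideal_def thick_def
proof (intro conjI)
  show "\<Union>\<C> \<subseteq> Ob C" using I ideal_sub by blast
  obtain I0 where I0: "I0 \<in> \<C>" using ne by blast
  then obtain Z where "Z \<in> I0" "is_zero_obj C Z" using I thick_zero_ex ideal_thick by blast
  then show "\<exists>Z\<in>\<Union>\<C>. is_zero_obj C Z" using I0 by blast
  show "\<forall>A\<in>Ob C. (shO C A \<in> \<Union>\<C>) = (A \<in> \<Union>\<C>)"
  proof
    fix A assume A: "A \<in> Ob C"
    have "\<forall>J\<in>\<C>. shO C A \<in> J \<longleftrightarrow> A \<in> J" using thick_sh ideal_thick I A by blast
    then show "(shO C A \<in> \<Union>\<C>) = (A \<in> \<Union>\<C>)" by blast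
  qed
  show "\<forall>f g h. (f, g, h) \<in> Dist C \<and> mdom C f \<in> \<Union>\<C> \<and> mdom C g \<in> \<Union>\<C> \<longrightarrow> mcod C g \<in> \<Union>\<C>"
  proof (intro allI impI)
    fix f g h assume a: "(f, g, h) \<in> Dist C \<and> mdom C f \<in> \<Union>\<C> \<and> mdom C g \<in> \<Union>\<C>"
    then obtain J1 J2 where J: "J1 \<in> \<C>" "J2 \<in> \<C>" "mdom C f \<in> J1" "mdom C g \<in> J2" by blast
    have "\<exists>J\<in>\<C>. mdom C f \<in> J \<and> mdom C g \<in> J"
    proof (cases "J1 \<subseteq> J2")
      case True then show ?thesis using J by blast
    next
      case False then have "J2 \<subseteq> J1" using ch J by blast
      then show ?thesis using J by blast
    qed
    then obtain J where "J \<in> \<C>" "mdom C f \<in> J" "mdom C g \<in> J" by blast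
    then have "mcod C g \<in> J" using thick_ext[of J f g h] I ideal_thick a by blast
    then show "mcod C g \<in> \<Union>\<C>" using \<open>J \<in> \<C>\<close> by blast
  qed
  show "\<forall>A B. is_summand C A B \<and> B \<in> \<Union>\<C> \<longrightarrow> A \<in> \<Union>\<C>"
  proof (intro allI impI)
    fix A B assume a: "is_summand C A B \<and> B \<in> \<Union>\<C>"
    then obtain J where J: "J \<in> \<C>" "B \<in> J" by blast
    then have "A \<in> J" using thick_summand[of J A B] I ideal_thick a by blast
    then show "A \<in> \<Union>\<C>" using J by blast
  qed
  show "\<forall>A\<in>\<Union>\<C>. \<forall>B\<in>Ob C. tenO C A B \<in> \<Union>\<C> \<and> tenO C B A \<in> \<Union>\<C>"
  proof (intro ballI conjI)
    fix A B assume A: "A \<in> \<Union>\<C>" and B: "B \<in> Ob C"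
    then obtain J where J: "J \<in> \<C>" "A \<in> J" by blast
    then show "tenO C A B \<in> \<Union>\<C>" using ideal_l I B by blast
    show "tenO C B A \<in> \<Union>\<C>" using J ideal_r I B by blast
  qed
qed

end

context MTCG
begin

inductive_set Mset for B where
  Mu: "unitO C \<in> Mset B"
| Mb: "b \<in> B \<Longrightarrow> b \<in> Mset B"
| Mt: "x \<in> Mset B \<Longrightarrow> y \<in> Mset B \<Longrightarrow> tenO C (tenO C x G) y \<in> Mset B"

lemma Mset_ob: "m \<in> Mset B \<Longrightarrow> B \<subseteq> Ob C \<Longrightarrow> m \<in> Ob C"
proof (induction m rule: Mset.induct)
  case Mu then show ?case using unit_ob by blast
next
  case (Mb b) then show ?case by blast
next
  case (Mt x y) then show ?case using ten_ob G by blast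
qed

lemma Mset_fin: "m \<in> Mset B \<Longrightarrow> B \<subseteq> Ob C \<Longrightarrow>
   \<exists>F. finite F \<and> F \<subseteq> B \<and> (\<forall>P\<in>Spc C. m \<in> P \<longrightarrow> (\<exists>b\<in>F. b \<in> P))"
proof (induction m rule: Mset.induct)
  case Mu
  have "\<forall>P\<in>Spc C. unitO C \<notin> P" using unit_notin unfolding Spc_def prime_ideal_def by blast
  then show ?case by blast
next
  case (Mb b)
  then show ?case by (intro exI[where x="{b}"]) auto
next
  case (Mt x y)
  obtain F1 where F1: "finite F1" "F1 \<subseteq> B" "\<forall>P\<in>Spc C. x \<in> P \<longrightarrow> (\<exists>b\<in>F1. b \<in> P)" using Mt by blast
  obtain F2 where F2: "finite F2" "F2 \<subseteq> B" "\<forall>P\<in>Spc C. y \<in> P \<longrightarrow> (\<exists>b\<in>F2. b \<in> P)" using Mt by blast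
  have xo: "x \<in> Ob C" and yo: "y \<in> Ob C" using Mset_ob Mt by blast+
  have "\<forall>P\<in>Spc C. tenO C (tenO C x G) y \<in> P \<longrightarrow> (\<exists>b\<in>F1 \<union> F2. b \<in> P)"
  proof (intro ballI impI)
    fix P assume P: "P \<in> Spc C" "tenO C (tenO C x G) y \<in> P"
    then have "x \<in> P \<or> y \<in> P" using prime_split xo yo unfolding Spc_def by blast
    then show "\<exists>b\<in>F1 \<union> F2. b \<in> P" using F1 F2 P by blast
  qed
  then show ?case using F1 F2 by (intro exI[where x="F1 \<union> F2"]) auto
qed

lemma prime_exists: assumes A: "A \<in> Ob C" and B: "B \<subseteq> Ob C"
  and dis: "ideal_gen {A} \<inter> Mset B = {}"
  shows "\<exists>P\<in>Spc C. A \<in> P \<and> P \<inter> Mset B = {}"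
proof -
  define Z where "Z = {I. thick_ideal C I \<and> ideal_gen {A} \<subseteq> I \<and> I \<inter> Mset B = {}}"
  have ne: "Z \<noteq> {}" unfolding Z_def using ideal_gen_ideal dis by blast
  have "\<exists>M\<in>Z. \<forall>X\<in>Z. M \<subseteq> X \<longrightarrow> X = M"
  proof (rule subset_Zorn_nonempty[OF ne])
    fix \<C> assume c: "\<C> \<noteq> {}" "subset.chain Z \<C>"
    then have cZ: "\<C> \<subseteq> Z" and ch: "\<forall>I\<in>\<C>. \<forall>J\<in>\<C>. I \<subseteq> J \<or> J \<subseteq> I"
      unfolding subset_chain_def by blast+
    have "thick_ideal C (\<Union>\<C>)" using chain_union[OF c(1) _ ch] cZ unfolding Z_def by blast
    moreover have "ideal_gen {A} \<subseteq> \<Union>\<C>" using c(1) cZ unfolding Z_def by blast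
    moreover have "\<Union>\<C> \<inter> Mset B = {}" using cZ unfolding Z_def by blast
    ultimately show "\<Union>\<C> \<in> Z" unfolding Z_def by blast
  qed
  then obtain P where PZ: "P \<in> Z" and max: "\<forall>X\<in>Z. P \<subseteq> X \<longrightarrow> X = P" by blast
  have Pi: "thick_ideal C P" and PA: "ideal_gen {A} \<subseteq> P" and PM: "P \<inter> Mset B = {}"
    using PZ unfolding Z_def by blast+
  have PO: "P \<subseteq> Ob C" using Pi ideal_sub by blast
  have PT: "thick C P" using Pi ideal_thick by blast
  have AP: "A \<in> P" using PA ideal_gen_sup A by blast
  have uP: "unitO C \<notin> P" using PM Mset.Mu by blast
  have "P \<noteq> Ob C" using uP unit_ob by blast
  have meet: "\<exists>m. m \<in> ideal_gen (P \<union> {X}) \<and> m \<in> Mset B" if X: "X \<in> Ob C" "X \<notin> P" for X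
  proof (rule ccontr)
    assume "\<not> ?thesis"
    then have d: "ideal_gen (P \<union> {X}) \<inter> Mset B = {}" by blast
    have PX: "P \<union> {X} \<subseteq> Ob C" using PO X by blast
    have s: "P \<union> {X} \<subseteq> ideal_gen (P \<union> {X})" using ideal_gen_sup[OF PX] .
    have "ideal_gen {A} \<subseteq> ideal_gen (P \<union> {X})" using PA s by auto
    then have "ideal_gen (P \<union> {X}) \<in> Z" unfolding Z_def using ideal_gen_ideal[of "P \<union> {X}"] d by blast
    moreover have "P \<subseteq> ideal_gen (P \<union> {X})" using s by blast
    ultimately have "ideal_gen (P \<union> {X}) = P" using max by blast
    then show False using s X by blast
  qed
  have prime: "\<forall>I J. thick_ideal C I \<and> thick_ideal C J \<and> tensor_set C I J \<subseteq> P \<longrightarrow> I \<subseteq> P \<or> J \<subseteq> P"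
  proof (intro allI impI)
    fix I J assume a: "thick_ideal C I \<and> thick_ideal C J \<and> tensor_set C I J \<subseteq> P"
    show "I \<subseteq> P \<or> J \<subseteq> P"
    proof (rule ccontr)
      assume "\<not> (I \<subseteq> P \<or> J \<subseteq> P)"
      then obtain X Y where XY: "X \<in> I" "X \<notin> P" "Y \<in> J" "Y \<notin> P" by blast
      have XO: "X \<in> Ob C" and YO: "Y \<in> Ob C" using XY a ideal_sub by blast+
      obtain m1 where m1: "m1 \<in> ideal_gen (P \<union> {X})" "m1 \<in> Mset B" using meet XO XY by blast
      obtain m2 where m2: "m2 \<in> ideal_gen (P \<union> {Y})" "m2 \<in> Mset B" using meet YO XY by blast
      have H: "\<forall>x\<in>P \<union> {X}. \<forall>c\<in>Ob C. \<forall>y\<in>P \<union> {Y}. tenO C (tenO C x c) y \<in> P"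
      proof (intro ballI)
        fix x c y assume x: "x \<in> P \<union> {X}" and c: "c \<in> Ob C" and y: "y \<in> P \<union> {Y}"
        have xo: "x \<in> Ob C" and yo: "y \<in> Ob C" using x y PO XO YO by blast+
        have xc: "tenO C x c \<in> Ob C" using ten_ob xo c by blast
        show "tenO C (tenO C x c) y \<in> P"
        proof (cases "x \<in> P")
          case True then show ?thesis using ideal_l[OF Pi] ideal_l[OF Pi] c yo xc by blast
        next
          case False
          then have xX: "x = X" using x by blast
          show ?thesis
          proof (cases "y \<in> P")
            case True show ?thesis using ideal_r[OF Pi True xc] by simp
          next
            case False
            then have yY: "y = Y" using y by blast
            have "tenO C c Y \<in> J" using ideal_r a XY c by blast
            then have "tenO C X (tenO C c Y) \<in> tensor_set C I J" unfolding tensor_set_def using XY by blast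
            then have "tenO C X (tenO C c Y) \<in> P" using a by blast
            then show ?thesis using thick_iso'[OF PT] assoc_iso[OF XO c YO] xX yY by blast
          qed
        qed
      qed
      have "tenO C (tenO C m1 G) m2 \<in> P" using climb[OF Pi _ _ H] m1 m2 G PO XO YO by blast
      moreover have "tenO C (tenO C m1 G) m2 \<in> Mset B" using Mset.Mt m1 m2 by blast
      ultimately show False using PM by blast
    qed
  qed
  have "P \<in> Spc C" unfolding Spc_def prime_ideal_def using Pi \<open>P \<noteq> Ob C\<close> prime by blast
  then show ?thesis using AP PM by blast
qed

lemma compact_key: assumes A: "A \<in> Ob C" and B: "B \<subseteq> Ob C"
  and cov: "\<forall>P\<in>Spc C. A \<in> P \<longrightarrow> (\<exists>b\<in>B. b \<in> P)"
  shows "\<exists>F. finite F \<and> F \<subseteq> B \<and> (\<forall>P\<in>Spc C. A \<in> P \<longrightarrow> (\<exists>b\<in>F. b \<in> P))"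
proof (cases "ideal_gen {A} \<inter> Mset B = {}")
  case True
  then obtain P where P: "P \<in> Spc C" "A \<in> P" "P \<inter> Mset B = {}" using prime_exists A B by blast
  then obtain b where "b \<in> B" "b \<in> P" using cov by blast
  then show ?thesis using P Mset.Mb by blast
next
  case False
  then obtain m where m: "m \<in> ideal_gen {A}" "m \<in> Mset B" by blast
  obtain F where F: "finite F" "F \<subseteq> B" "\<forall>P\<in>Spc C. m \<in> P \<longrightarrow> (\<exists>b\<in>F. b \<in> P)" using Mset_fin[OF m(2) B] by (elim exE conjE) blast
  have "\<forall>P\<in>Spc C. A \<in> P \<longrightarrow> m \<in> P"
  proof (intro ballI impI)
    fix P assume "P \<in> Spc C" "A \<in> P"
    then have "ideal_gen {A} \<subseteq> P" using ideal_gen_least[OF spc_ideal] by blast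
    then show "m \<in> P" using m by blast
  qed
  then show ?thesis using F by blast
qed

end

context MTCG
begin

lemma spc_open_get: assumes "spc_open U"
  shows "\<exists>\<A>. \<A> \<subseteq> Ob C \<and> Spc C - U = Spc C \<inter> \<Inter>(Vsupp C ` \<A>)"
  using assms unfolding spc_open_def by (elim conjE)

lemma compact_U: assumes A: "A \<in> Ob C" shows "compactin (spc_top C) (Spc C - Vsupp C A)"
  unfolding compactin_def topspace_spc
proof (intro conjI allI impI)
  show "Spc C - Vsupp C A \<subseteq> Spc C" by blast
  fix \<U> assume a: "(\<forall>U\<in>\<U>. openin (spc_top C) U) \<and> Spc C - Vsupp C A \<subseteq> \<Union>\<U>"
  define F where "F U = (SOME \<A>. \<A> \<subseteq> Ob C \<and> Spc C - U = Spc C \<inter> \<Inter>(Vsupp C ` \<A>))" for U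
  have F: "F U \<subseteq> Ob C \<and> Spc C - U = Spc C \<inter> \<Inter>(Vsupp C ` F U)" if U: "U \<in> \<U>" for U
  proof -
    have "spc_open U" using a U openin_spc by metis
    then show ?thesis unfolding F_def by (rule someI_ex[OF spc_open_get])
  qed
  have Usub: "U \<subseteq> Spc C" if "U \<in> \<U>" for U using a that openin_spc spc_open_def by metis
  define Bs where "Bs = (\<Union>U\<in>\<U>. F U)"
  have BO: "Bs \<subseteq> Ob C" unfolding Bs_def using F by auto
  have cov: "\<forall>P\<in>Spc C. A \<in> P \<longrightarrow> (\<exists>b\<in>Bs. b \<in> P)"
  proof (intro ballI impI)
    fix P assume P: "P \<in> Spc C" "A \<in> P"
    then have "P \<in> Spc C - Vsupp C A" unfolding Vsupp_def by blast
    then obtain U where U: "U \<in> \<U>" "P \<in> U" using a by blast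
    have eq: "Spc C - U = Spc C \<inter> \<Inter>(Vsupp C ` F U)" using F[OF U(1)] by (elim conjE)
    have "P \<notin> Spc C \<inter> \<Inter>(Vsupp C ` F U)" unfolding eq[symmetric] using U by blast
    then obtain b where "b \<in> F U" "P \<notin> Vsupp C b" using P by blast
    then have "b \<in> Bs" "b \<in> P" unfolding Bs_def Vsupp_def using U P by auto
    then show "\<exists>b\<in>Bs. b \<in> P" by blast
  qed
  obtain Fin where Fin: "finite Fin" "Fin \<subseteq> Bs" "\<forall>P\<in>Spc C. A \<in> P \<longrightarrow> (\<exists>b\<in>Fin. b \<in> P)"
    using compact_key[OF A BO cov] by blast
  define Ub where "Ub b = (SOME U. U \<in> \<U> \<and> b \<in> F U)" for b
  have Ub: "Ub b \<in> \<U> \<and> b \<in> F (Ub b)" if "b \<in> Fin" for b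
  proof -
    have "\<exists>U. U \<in> \<U> \<and> b \<in> F U" using Fin(2) that unfolding Bs_def by blast
    then show ?thesis unfolding Ub_def by (rule someI_ex)
  qed
  have "Spc C - Vsupp C A \<subseteq> \<Union>(Ub ` Fin)"
  proof
    fix P assume P: "P \<in> Spc C - Vsupp C A"
    then have "A \<in> P" "P \<in> Spc C" unfolding Vsupp_def by blast+
    then obtain b where b: "b \<in> Fin" "b \<in> P" using Fin(3) by blast
    have U: "Ub b \<in> \<U>" "b \<in> F (Ub b)" using Ub[OF b(1)] by blast+
    have eq: "Spc C - Ub b = Spc C \<inter> \<Inter>(Vsupp C ` F (Ub b))" using F[OF U(1)] by (elim conjE)
    have "P \<notin> Vsupp C b" using b unfolding Vsupp_def by blast
    then have "P \<notin> Spc C \<inter> \<Inter>(Vsupp C ` F (Ub b))" using U(2) by blast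
    then have "P \<notin> Spc C - Ub b" unfolding eq .
    then show "P \<in> \<Union>(Ub ` Fin)" using P b by blast
  qed
  moreover have "Ub ` Fin \<subseteq> \<U>" using Ub by blast
  moreover have "finite (Ub ` Fin)" using Fin by blast
  ultimately show "\<exists>\<F>. finite \<F> \<and> \<F> \<subseteq> \<U> \<and> Spc C - Vsupp C A \<subseteq> \<Union>\<F>" by blast
qed

lemma fin_int: "finite F \<Longrightarrow> F \<subseteq> Ob C \<Longrightarrow> \<exists>D\<in>Ob C. Vsupp C D = Spc C \<inter> \<Inter>(Vsupp C ` F)"
proof (induction F rule: finite_induct)
  case empty
  then show ?case using Vsupp_unit unit_ob by auto
next
  case (insert a F)
  then obtain D where D: "D \<in> Ob C" "Vsupp C D = Spc C \<inter> \<Inter>(Vsupp C ` F)" by blast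
  have a: "a \<in> Ob C" using insert by blast
  have "Vsupp C (tenO C (tenO C a G) D) = Vsupp C a \<inter> Vsupp C D" using Vsupp_int[OF a D(1)] .
  also have "\<dots> = Spc C \<inter> \<Inter>(Vsupp C ` insert a F)"
  proof -
    have "Vsupp C a \<inter> Vsupp C D = Spc C \<inter> (Vsupp C a \<inter> \<Inter>(Vsupp C ` F))"
      unfolding D(2) by (rule Int_left_commute)
    then show ?thesis by simp
  qed
  finally have e: "Vsupp C (tenO C (tenO C a G) D) = Spc C \<inter> \<Inter>(Vsupp C ` insert a F)" .
  have "tenO C (tenO C a G) D \<in> Ob C" using ten_ob[OF ten_ob[OF a G] D(1)] .
  then show ?case using e by blast
qed

lemma closed_piece: assumes cl: "closedin (spc_top C) Z" and co: "compactin (spc_top C) (topspace (spc_top C) - Z)"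
  shows "\<exists>D\<in>Ob C. Z = Vsupp C D"
proof -
  have ZS: "Z \<subseteq> Spc C" and op: "spc_open (Spc C - Z)"
    using cl unfolding closedin_def topspace_spc openin_spc by blast+
  obtain \<A> where A: "\<A> \<subseteq> Ob C" "Spc C - (Spc C - Z) = Spc C \<inter> \<Inter>(Vsupp C ` \<A>)"
    using spc_open_get[OF op] by (elim exE conjE)
  have Zeq: "Z = Spc C \<inter> \<Inter>(Vsupp C ` \<A>)" using A(2) ZS by (simp add: Diff_Diff_Int inf.absorb2)
  define f where "f b = Spc C - Vsupp C b" for b
  have opn: "\<forall>U\<in>f ` \<A>. openin (spc_top C) U"
  proof
    fix U assume "U \<in> f ` \<A>"
    then obtain b where b: "b \<in> \<A>" "U = f b" by blast
    have "closedin (spc_top C) (Vsupp C b)" using Vsupp_closed A(1) b by blast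
    then have "openin (spc_top C) (topspace (spc_top C) - Vsupp C b)" unfolding closedin_def by blast
    then show "openin (spc_top C) U" using b unfolding f_def topspace_spc by simp
  qed
  have cv: "Spc C - Z \<subseteq> \<Union>(f ` \<A>)"
  proof
    fix P assume P: "P \<in> Spc C - Z"
    then have "P \<notin> \<Inter>(Vsupp C ` \<A>)" using Zeq by blast
    then obtain b where "b \<in> \<A>" "P \<notin> Vsupp C b" by blast
    then show "P \<in> \<Union>(f ` \<A>)" using P unfolding f_def by blast
  qed
  have "\<exists>\<F>. finite \<F> \<and> \<F> \<subseteq> f ` \<A> \<and> Spc C - Z \<subseteq> \<Union>\<F>"
    using co opn cv unfolding compactin_def topspace_spc by blast
  then obtain \<F> where Fs: "finite \<F>" "\<F> \<subseteq> f ` \<A>" "Spc C - Z \<subseteq> \<Union>\<F>" by blast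
  obtain \<A>0 where A0: "\<A>0 \<subseteq> \<A>" "finite \<A>0" "\<F> = f ` \<A>0" using finite_subset_image[OF Fs(1) Fs(2)] by blast
  have "Z = Spc C \<inter> \<Inter>(Vsupp C ` \<A>0)"
  proof
    show "Z \<subseteq> Spc C \<inter> \<Inter>(Vsupp C ` \<A>0)" using Zeq A0(1) by blast
    show "Spc C \<inter> \<Inter>(Vsupp C ` \<A>0) \<subseteq> Z"
    proof
      fix P assume P: "P \<in> Spc C \<inter> \<Inter>(Vsupp C ` \<A>0)"
      show "P \<in> Z"
      proof (rule ccontr)
        assume "P \<notin> Z"
        then have "P \<in> \<Union>(f ` \<A>0)" using Fs(3) A0(3) P by blast
        then obtain b where "b \<in> \<A>0" "P \<in> f b" by blast
        then show False using P unfolding f_def by blast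
      qed
    qed
  qed
  moreover have "\<A>0 \<subseteq> Ob C" using A0(1) A(1) by blast
  ultimately show ?thesis using fin_int[OF A0(2)] by (metis (no_types))
qed

lemma thomason_char: assumes "thomason (spc_top C) S"
  shows "S \<subseteq> Spc C \<and> (\<forall>P\<in>S. \<exists>A\<in>Ob C. P \<in> Vsupp C A \<and> Vsupp C A \<subseteq> S)"
proof -
  obtain \<Z> where Z: "\<forall>Z\<in>\<Z>. closedin (spc_top C) Z \<and> compactin (spc_top C) (topspace (spc_top C) - Z)"
    "S = \<Union>\<Z>" using assms unfolding thomason_def by blast
  have pc: "\<exists>D\<in>Ob C. Z = Vsupp C D" if "Z \<in> \<Z>" for Z using closed_piece Z(1) that by blast
  have "S \<subseteq> Spc C"
  proof
    fix P assume "P \<in> S"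
    then obtain Z where "Z \<in> \<Z>" "P \<in> Z" using Z(2) by blast
    then obtain D where "Z = Vsupp C D" using pc by blast
    then show "P \<in> Spc C" using \<open>P \<in> Z\<close> unfolding Vsupp_def by blast
  qed
  moreover have "\<forall>P\<in>S. \<exists>A\<in>Ob C. P \<in> Vsupp C A \<and> Vsupp C A \<subseteq> S"
  proof
    fix P assume "P \<in> S"
    then obtain Z where Z1: "Z \<in> \<Z>" "P \<in> Z" using Z(2) by blast
    then obtain D where D: "D \<in> Ob C" "Z = Vsupp C D" using pc by blast
    have "Vsupp C D \<subseteq> S" using Z1 D Z(2) by blast
    then show "\<exists>A\<in>Ob C. P \<in> Vsupp C A \<and> Vsupp C A \<subseteq> S" using D Z1 by blast
  qed
  ultimately show ?thesis by (rule conjI)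
qed

lemma Phi_thomason: assumes "I \<subseteq> Ob C" shows "thomason (spc_top C) (Phi C I)"
  unfolding thomason_def
proof (intro exI[where x="Vsupp C ` I"] conjI ballI)
  fix Z assume "Z \<in> Vsupp C ` I"
  then obtain A where A: "A \<in> I" "Z = Vsupp C A" by blast
  then have AO: "A \<in> Ob C" using assms by blast
  show "closedin (spc_top C) Z" using Vsupp_closed AO A by blast
  show "compactin (spc_top C) (topspace (spc_top C) - Z)" using compact_U AO A topspace_spc by simp
next
  show "Phi C I = \<Union>(Vsupp C ` I)" unfolding Phi_def Vsupp_def by blast
qed

lemma semiprime_Theta: "semiprime C (Theta C S)"
  unfolding semiprime_def Theta_def
proof (intro conjI exI[where x="Spc C - S"])
  show "thick_ideal C (Ob C \<inter> \<Inter>(Spc C - S))" using thick_ideal_Inter spc_ideal by blast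
qed auto

lemma Theta_Phi: assumes "semiprime C I" shows "Theta C (Phi C I) = I"
proof -
  obtain F where F: "F \<subseteq> Spc C" "I = Ob C \<inter> \<Inter>F" and Ii: "thick_ideal C I"
    using assms unfolding semiprime_def by blast
  have e: "Spc C - Phi C I = {P \<in> Spc C. I \<subseteq> P}" unfolding Phi_def by blast
  have "F \<subseteq> {P \<in> Spc C. I \<subseteq> P}" using F by blast
  then have "Ob C \<inter> \<Inter>{P \<in> Spc C. I \<subseteq> P} \<subseteq> I" using F(2) by blast
  moreover have "I \<subseteq> Ob C \<inter> \<Inter>{P \<in> Spc C. I \<subseteq> P}" using ideal_sub[OF Ii] by blast
  ultimately show ?thesis unfolding Theta_def e by blast
qed

lemma Phi_Theta: assumes "thomason (spc_top C) S" shows "Phi C (Theta C S) = S"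
proof -
  have S: "S \<subseteq> Spc C" "\<forall>P\<in>S. \<exists>A\<in>Ob C. P \<in> Vsupp C A \<and> Vsupp C A \<subseteq> S"
    using thomason_char[OF assms] by blast+
  show ?thesis
  proof
    show "Phi C (Theta C S) \<subseteq> S" unfolding Phi_def Theta_def by blast
    show "S \<subseteq> Phi C (Theta C S)"
    proof
      fix P assume P: "P \<in> S"
      then obtain A where A: "A \<in> Ob C" "P \<in> Vsupp C A" "Vsupp C A \<subseteq> S" using S by blast
      have "A \<in> Theta C S" unfolding Theta_def using A unfolding Vsupp_def by blast
      moreover have "A \<notin> P" using A unfolding Vsupp_def by blast
      ultimately show "P \<in> Phi C (Theta C S)" unfolding Phi_def using P S by blast
    qed
  qed
qed

lemma main_loc:
  shows "bij_betw (Phi C) {I. semiprime C I} {S. thomason (spc_top C) S}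
       \<and> (\<forall>S. thomason (spc_top C) S \<longrightarrow> semiprime C (Theta C S))
       \<and> (\<forall>I. semiprime C I \<longrightarrow> Theta C (Phi C I) = I)
       \<and> (\<forall>S. thomason (spc_top C) S \<longrightarrow> Phi C (Theta C S) = S)
       \<and> (\<forall>I J. semiprime C I \<and> semiprime C J \<and> I \<subseteq> J \<longrightarrow> Phi C I \<subseteq> Phi C J)
       \<and> (\<forall>S T. thomason (spc_top C) S \<and> thomason (spc_top C) T \<and> S \<subseteq> T \<longrightarrow> Theta C S \<subseteq> Theta C T)"
proof (intro conjI allI impI)
  show "bij_betw (Phi C) {I. semiprime C I} {S. thomason (spc_top C) S}"
    unfolding bij_betw_def
  proof
    show "inj_on (Phi C) {I. semiprime C I}"
      by (rule inj_on_inverseI[where g="Theta C"]) (use Theta_Phi in blast)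
    show "Phi C ` {I. semiprime C I} = {S. thomason (spc_top C) S}"
    proof
      show "Phi C ` {I. semiprime C I} \<subseteq> {S. thomason (spc_top C) S}"
        using Phi_thomason ideal_sub unfolding semiprime_def by blast
      show "{S. thomason (spc_top C) S} \<subseteq> Phi C ` {I. semiprime C I}"
      proof
        fix S assume "S \<in> {S. thomason (spc_top C) S}"
        then have "S = Phi C (Theta C S)" using Phi_Theta by simp
        then show "S \<in> Phi C ` {I. semiprime C I}" using semiprime_Theta by blast
      qed
    qed
  qed
next
  fix S show "semiprime C (Theta C S)" by (rule semiprime_Theta)
next
  fix I assume "semiprime C I" then show "Theta C (Phi C I) = I" by (rule Theta_Phi)
next
  fix S assume "thomason (spc_top C) S" then show "Phi C (Theta C S) = S" by (rule Phi_Theta)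
next
  fix I J assume "semiprime C I \<and> semiprime C J \<and> I \<subseteq> J"
  then show "Phi C I \<subseteq> Phi C J" unfolding Phi_def by blast
next
  fix S T assume "thomason (spc_top C) S \<and> thomason (spc_top C) T \<and> S \<subseteq> T"
  then show "Theta C S \<subseteq> Theta C T" unfolding Theta_def by blast
qed

end

theorem mainTheorem17:
  fixes C :: "('o,'m) mdc" and G :: 'o
  assumes "is_monoidal_triangulated C"
    and "G \<in> Ob C"
    and "thick_gen C {G} = Ob C"
  shows "bij_betw (Phi C) {I. semiprime C I} {S. thomason (spc_top C) S}
       \<and> (\<forall>S. thomason (spc_top C) S \<longrightarrow> semiprime C (Theta C S))
       \<and> (\<forall>I. semiprime C I \<longrightarrow> Theta C (Phi C I) = I)
       \<and> (\<forall>S. thomason (spc_top C) S \<longrightarrow> Phi C (Theta C S) = S)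
       \<and> (\<forall>I J. semiprime C I \<and> semiprime C J \<and> I \<subseteq> J \<longrightarrow> Phi C I \<subseteq> Phi C J)
       \<and> (\<forall>S T. thomason (spc_top C) S \<and> thomason (spc_top C) T \<and> S \<subseteq> T \<longrightarrow> Theta C S \<subseteq> Theta C T)"
proof -
  interpret MTCG C G
    by unfold_locales (rule assms)+
  show ?thesis by (rule main_loc)
qed


end
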